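(* Let $p$ be a prime and $b$ an integer with $0<b<p$. If $S^G_{1,b}$ is generated by 4 invariants (so $R=\mathbb{C}[y_0,y_1,y_2,y_3]$), then the free resolution of $R/\ker\varphi_{1,b}$ is $$R\xleftarrow{\ \partial_1\ } R(-(2p-b^{-1}+1))\oplus R(-(2p-b+1))\oplus R(-2p)\xleftarrow{\ \partial_2\ } R(-(3p-b^{-1}+1))\oplus R(-(3p-b+1))\leftarrow 0,$$ where $\partial_1=\begin{bmatrix} y_1^{p-b^{-1}}-y_0y_2 & y_2^{p-b}-y_1y_3 & y_1^{p-b^{-1}-1}y_2^{p-b-1}-y_0y_3\end{bmatrix}$ and $$\partial_2=\begin{bmatrix}-y_3 & -y_2^{p-b-1}\\ -y_1^{p-b^{-1}-1} & -y_0\\ y_2 & y_1\end{bmatrix}.$$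
   Context: Let $S=\mathbb{C}[x_1,x_2]$ (standard grading), $\zeta=e^{2\pi i/p}$, $G=\mathbb{Z}/p\mathbb{Z}=\langle\zeta\rangle$ acting on $S$ by $x_1\mapsto\zeta x_1$, $x_2\mapsto\zeta^bx_2$, with invariant ring $S^G_{1,b}$ (spanned by monomials $x_1^cx_2^d$ with $c+bd\equiv0\pmod p$). $\mathrm{inv}_{1,b}$ denotes the minimal set of monomial generators of $S^G_{1,b}$ as a $\mathbb{C}$-algebra: the nonconstant invariant monomials that are not a product of two nonconstant invariant monomials; "generated by 4 invariants" means $|\mathrm{inv}_{1,b}|=4$. Writing $\mathrm{inv}_{1,b}=\{z_0,\dots,z_n\}$ in lexicographic order with $x_1>x_2$, $R=\mathbb{C}[y_0,\dots,y_n]$ is graded by $\deg y_i=\deg z_i$ (total degree in $x_1,x_2$), and $\varphi_{1,b}:R\to S^G_{1,b}$ is the $\mathbb{C}$-algebra map $y_i\mapsto z_i$. $R(-d)$ denotes $R$ with grading shifted by $d$. $b^{-1}$ is the unique integer $0<b^{-1}<p$ with $bb^{-1}\equiv1\pmod p$. *)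

theory Defs
  imports Complex_Main "HOL-Library.Poly_Mapping" "HOL-Library.Numeral_Type"
          "HOL-Library.Product_Lexorder" "HOL-Computational_Algebra.Primes"
begin

(* Polynomial rings.  S = C[x1,x2]: variables 0 (= x1) and 1 (= x2) of type nat.
   R = C[y0,y1,y2,y3]: variables of the 4-element type 4 (elements 0,1,2,3). *)
type_synonym Spoly = "(nat \<Rightarrow>\<^sub>0 nat) \<Rightarrow>\<^sub>0 complex"
type_synonym Rpoly = "(4 \<Rightarrow>\<^sub>0 nat) \<Rightarrow>\<^sub>0 complex"

(* x1^c x2^d is invariant under x1 -> zeta x1, x2 -> zeta^b x2 iff c + b d = 0 mod p *)
definition is_invariant :: "nat \<Rightarrow> nat \<Rightarrow> nat \<times> nat \<Rightarrow> bool" where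
  "is_invariant p b e \<longleftrightarrow> (fst e + b * snd e) mod p = 0"

definition inv_gens :: "nat \<Rightarrow> nat \<Rightarrow> (nat \<times> nat) set" where
  "inv_gens p b = {e. e \<noteq> (0,0) \<and> is_invariant p b e \<and>
     \<not> (\<exists>e1 e2. e1 \<noteq> (0,0) \<and> e2 \<noteq> (0,0) \<and> is_invariant p b e1 \<and> is_invariant p b e2
            \<and> fst e = fst e1 + fst e2 \<and> snd e = snd e1 + snd e2)}"

(* z_0, ..., z_n in lexicographic order with x1 > x2 (z_0 the largest) *)
definition zs :: "nat \<Rightarrow> nat \<Rightarrow> (nat \<times> nat) list" where
  "zs p b = rev (sorted_list_of_set (inv_gens p b))"

definition xmon :: "nat \<times> nat \<Rightarrow> Spoly" where
  "xmon e = Poly_Mapping.single (Poly_Mapping.single 0 (fst e) + Poly_Mapping.single 1 (snd e)) 1"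

definition var_index :: "4 \<Rightarrow> nat" where
  "var_index v = (if v = 0 then 0 else if v = 1 then 1 else if v = 2 then 2 else 3)"

definition zdeg :: "nat \<Rightarrow> nat \<Rightarrow> nat \<Rightarrow> nat" where
  "zdeg p b i = fst (zs p b ! i) + snd (zs p b ! i)"

(* the C-algebra map phi_{1,b} : R -> S, y_i |-> z_i *)
definition phi :: "nat \<Rightarrow> nat \<Rightarrow> Rpoly \<Rightarrow> Spoly" where
  "phi p b f = (\<Sum>m\<in>Poly_Mapping.keys f. Poly_Mapping.single (0 :: nat \<Rightarrow>\<^sub>0 nat) (Poly_Mapping.lookup f m) *
       (\<Prod>v\<in>Poly_Mapping.keys (m :: 4 \<Rightarrow>\<^sub>0 nat). xmon (zs p b ! var_index v) ^ Poly_Mapping.lookup m v))"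

definition y :: "4 \<Rightarrow> Rpoly" where
  "y v = Poly_Mapping.single (Poly_Mapping.single v 1) 1"

(* grading of R: deg y_i = deg z_i *)
definition wdeg :: "nat \<Rightarrow> nat \<Rightarrow> (4 \<Rightarrow>\<^sub>0 nat) \<Rightarrow> nat" where
  "wdeg p b m = (\<Sum>v\<in>Poly_Mapping.keys m. Poly_Mapping.lookup m v * zdeg p b (var_index v))"

definition homog :: "nat \<Rightarrow> nat \<Rightarrow> Rpoly \<Rightarrow> int \<Rightarrow> bool" where
  "homog p b f d \<longleftrightarrow> (\<forall>m\<in>Poly_Mapping.keys f. int (wdeg p b m) = d)"

definition binv :: "nat \<Rightarrow> nat \<Rightarrow> nat" where
  "binv p b = (THE c. 0 < c \<and> c < p \<and> (b * c) mod p = 1)"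

definition D1 :: "nat \<Rightarrow> nat \<Rightarrow> nat \<Rightarrow> Rpoly" where
  "D1 p b i = (if i = 0 then y 1 ^ (p - binv p b) - y 0 * y 2
               else if i = 1 then y 2 ^ (p - b) - y 1 * y 3
               else y 1 ^ (p - binv p b - 1) * y 2 ^ (p - b - 1) - y 0 * y 3)"

definition D2 :: "nat \<Rightarrow> nat \<Rightarrow> nat \<Rightarrow> nat \<Rightarrow> Rpoly" where
  "D2 p b i j = (if i = 0 then (if j = 0 then - y 3 else - (y 2 ^ (p - b - 1)))
                 else if i = 1 then (if j = 0 then - (y 1 ^ (p - binv p b - 1)) else - y 0)
                 else (if j = 0 then y 2 else y 1))"

(* the maps R^3 -> R and R^2 -> R^3 (column vectors as tuples) *)
definition partial1 :: "nat \<Rightarrow> nat \<Rightarrow> Rpoly \<times> Rpoly \<times> Rpoly \<Rightarrow> Rpoly" where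
  "partial1 p b a = D1 p b 0 * fst a + D1 p b 1 * fst (snd a) + D1 p b 2 * snd (snd a)"

definition partial2 :: "nat \<Rightarrow> nat \<Rightarrow> Rpoly \<times> Rpoly \<Rightarrow> Rpoly \<times> Rpoly \<times> Rpoly" where
  "partial2 p b u = (D2 p b 0 0 * fst u + D2 p b 0 1 * snd u,
                     D2 p b 1 0 * fst u + D2 p b 1 1 * snd u,
                     D2 p b 2 0 * fst u + D2 p b 2 1 * snd u)"

(* twists: F1 = R(-dg1!0) + R(-dg1!1) + R(-dg1!2), F2 = R(-dg2!0) + R(-dg2!1) *)
definition dg1 :: "nat \<Rightarrow> nat \<Rightarrow> int list" where
  "dg1 p b = [2 * int p - int (binv p b) + 1, 2 * int p - int b + 1, 2 * int p]"

definition dg2 :: "nat \<Rightarrow> nat \<Rightarrow> int list" where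
  "dg2 p b = [3 * int p - int (binv p b) + 1, 3 * int p - int b + 1]"

end

theory Submission
  imports Defs "HOL-Number_Theory.Number_Theory"
begin

lemma four_cases: "(v::4) = 0 \<or> v = 1 \<or> v = 2 \<or> v = 3"
proof (cases v rule: bit0.cases)
  case (1 z)
  then have "z = 0 \<or> z = 1 \<or> z = 2 \<or> z = 3" by auto
  then show ?thesis using 1 by auto
qed

lemma four_distinct: "(0::4) \<noteq> 1" "(0::4) \<noteq> 2" "(0::4) \<noteq> 3" "(1::4) \<noteq> 2" "(1::4) \<noteq> 3" "(2::4) \<noteq> 3"
  by simp_all

lemma four_less: "(0::4) < 1" "(1::4) < 2" "(2::4) < 3"
  by (simp_all add: less_bit0_def bit0.Rep_numeral bit0.Rep_0 bit0.Rep_1)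

lemma UNIV4: "(UNIV::4 set) = {0,1,2,3}"
  using four_cases by auto

lemma less1_4: "(k::4) < 1 \<Longrightarrow> k = 0"
  using four_cases[of k] four_less by (auto simp: less_bit0_def bit0.Rep_numeral bit0.Rep_0 bit0.Rep_1)

lemma binv_prop:
  fixes p b :: nat
  assumes "prime p" "0 < b" "b < p"
  shows "0 < binv p b \<and> binv p b < p \<and> (b * binv p b) mod p = 1"
proof -
  have ndvd: "\<not> p dvd b" using assms by (auto dest: dvd_imp_le)
  have cop: "coprime b p" using prime_imp_coprime[OF assms(1) ndvd]
    by (simp add: coprime_commute)
  obtain B where B: "[b * B = 1] (mod p)"
    using cong_solve_coprime_nat[OF cop] by auto
  have p1: "p > 1" using assms prime_gt_1_nat by blast
  define B' where "B' = B mod p"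
  have B'1: "(b * B') mod p = 1"
    using B p1 unfolding B'_def cong_def by (simp add: mod_mult_right_eq)
  have B'p: "B' < p" unfolding B'_def using p1 by simp
  have B'0: "0 < B'" using B'1 p1 by (cases "B' = 0") auto
  have uniq: "c1 = c2" if "0 < c1 \<and> c1 < p \<and> (b * c1) mod p = 1" "0 < c2 \<and> c2 < p \<and> (b * c2) mod p = 1" for c1 c2
  proof -
    have "[b * c1 = b * c2] (mod p)" using that unfolding cong_def by simp
    then have "[c1 = c2] (mod p)"
      using cong_mult_lcancel_nat[OF cop] by simp
    then show ?thesis using that unfolding cong_def by simp
  qed
  have "binv p b = B'"
    unfolding binv_def
  proof (rule the_equality)
    show "0 < B' \<and> B' < p \<and> b * B' mod p = 1" using B'0 B'p B'1 by blast
    show "x = B'" if "0 < x \<and> x < p \<and> b * x mod p = 1" for x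
      using uniq[OF that] B'0 B'p B'1 by blast
  qed
  then show ?thesis using B'0 B'p B'1 by simp
qed

lemma mod0_ge: "(x::nat) mod p = 0 \<Longrightarrow> x \<noteq> 0 \<Longrightarrow> p \<le> x"
  by (metis mod_less not_le)

lemma prime_mul_mod0:
  fixes p b t :: nat
  assumes "prime p" "0 < b" "b < p" "(b * t) mod p = 0" "t \<noteq> 0"
  shows "p \<le> t"
proof -
  have "p dvd b * t" using assms(4) mod_0_imp_dvd by blast
  moreover have "\<not> p dvd b" using assms by (auto dest: dvd_imp_le)
  ultimately have "p dvd t" using assms(1) prime_dvd_mult_iff by blast
  then show ?thesis using assms(5) by (auto dest: dvd_imp_le)
qed

lemma inv_1a:
  fixes p b :: nat
  assumes "prime p" "0 < b" "b < p"
  shows "is_invariant p b (1, p - binv p b)"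
proof -
  let ?B = "binv p b"
  have bp: "0 < ?B \<and> ?B < p \<and> (b * ?B) mod p = 1" using binv_prop[OF assms] .
  have p1: "p > 1" using assms prime_gt_1_nat by blast
  have eq: "(1 + b * (p - ?B)) + b * ?B = 1 + b * p" using bp
    by (simp add: diff_mult_distrib2 algebra_simps)
  have "(1 + b * p) mod p = 1" using p1 by (simp only: mod_mult_self1) simp
  then have "((1 + b * (p - ?B)) + b * ?B) mod p = 1" using eq by simp
  then have "((1 + b * (p - ?B)) + 1) mod p = 1" using bp by (metis mod_add_right_eq)
  then have "(1 + b * (p - ?B)) mod p = 0" using p1
    by (metis add.commute add_cancel_right_left mod_Suc plus_1_eq_Suc zero_neq_one)
  then show ?thesis unfolding is_invariant_def by simp
qed

lemma inv_gensI:
  assumes "e \<noteq> (0,0)" "is_invariant p b e"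
    and "\<And>e1 e2. e1 \<noteq> (0,0) \<Longrightarrow> e2 \<noteq> (0,0) \<Longrightarrow> is_invariant p b e1 \<Longrightarrow> is_invariant p b e2
            \<Longrightarrow> fst e = fst e1 + fst e2 \<Longrightarrow> snd e = snd e1 + snd e2 \<Longrightarrow> False"
  shows "e \<in> inv_gens p b"
  using assms unfolding inv_gens_def by blast

lemma mem_p0:
  fixes p b :: nat
  assumes "prime p" "0 < b" "b < p"
  shows "(p, 0) \<in> inv_gens p b"
proof (rule inv_gensI)
  show "(p, 0) \<noteq> (0, 0)" using assms by auto
  show "is_invariant p b (p, 0)" unfolding is_invariant_def by simp
  fix e1 e2 :: "nat \<times> nat"
  assume h: "e1 \<noteq> (0,0)" "e2 \<noteq> (0,0)" "is_invariant p b e1" "is_invariant p b e2"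
    "fst (p, 0) = fst e1 + fst e2" "snd (p, 0::nat) = snd e1 + snd e2"
  obtain x1 y1 x2 y2 where e: "e1 = (x1, y1)" "e2 = (x2, y2)" by fastforce
  have "y1 = 0" "y2 = 0" using h e by auto
  then have "x1 mod p = 0" "x2 mod p = 0" "x1 \<noteq> 0" "x2 \<noteq> 0" using h e unfolding is_invariant_def by auto
  then have "p \<le> x1" "p \<le> x2" by (auto intro: mod0_ge)
  then show False using h e assms by auto
qed

lemma mem_0p:
  fixes p b :: nat
  assumes "prime p" "0 < b" "b < p"
  shows "(0, p) \<in> inv_gens p b"
proof (rule inv_gensI)
  show "(0, p) \<noteq> (0, 0)" using assms by auto
  show "is_invariant p b (0, p)" unfolding is_invariant_def by simp
  fix e1 e2 :: "nat \<times> nat"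
  assume h: "e1 \<noteq> (0,0)" "e2 \<noteq> (0,0)" "is_invariant p b e1" "is_invariant p b e2"
    "fst (0::nat, p) = fst e1 + fst e2" "snd (0, p) = snd e1 + snd e2"
  obtain x1 y1 x2 y2 where e: "e1 = (x1, y1)" "e2 = (x2, y2)" by fastforce
  have "x1 = 0" "x2 = 0" using h e by auto
  then have "(b * y1) mod p = 0" "(b * y2) mod p = 0" "y1 \<noteq> 0" "y2 \<noteq> 0" using h e unfolding is_invariant_def by auto
  then have "p \<le> y1" "p \<le> y2" by (auto intro: prime_mul_mod0[OF assms])
  then show False using h e assms by auto
qed

lemma mem_c1:
  fixes p b :: nat
  assumes "prime p" "0 < b" "b < p"
  shows "(p - b, 1) \<in> inv_gens p b"
proof (rule inv_gensI)
  show "(p - b, 1) \<noteq> (0, 0)" using assms by auto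
  show "is_invariant p b (p - b, 1)" unfolding is_invariant_def using assms by simp
  fix e1 e2 :: "nat \<times> nat"
  assume h: "e1 \<noteq> (0,0)" "e2 \<noteq> (0,0)" "is_invariant p b e1" "is_invariant p b e2"
    "fst (p - b, 1::nat) = fst e1 + fst e2" "snd (p - b, 1::nat) = snd e1 + snd e2"
  obtain x1 y1 x2 y2 where e: "e1 = (x1, y1)" "e2 = (x2, y2)" by fastforce
  have "y1 = 0 \<or> y2 = 0" using h e by auto
  then show False
  proof
    assume "y1 = 0"
    then have "x1 mod p = 0" "x1 \<noteq> 0" using h e unfolding is_invariant_def by auto
    then have "p \<le> x1" by (auto intro: mod0_ge)
    then show False using h e assms by auto
  next
    assume "y2 = 0"
    then have "x2 mod p = 0" "x2 \<noteq> 0" using h e unfolding is_invariant_def by auto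
    then have "p \<le> x2" by (auto intro: mod0_ge)
    then show False using h e assms by auto
  qed
qed

lemma mem_1a:
  fixes p b :: nat
  assumes "prime p" "0 < b" "b < p"
  shows "(1, p - binv p b) \<in> inv_gens p b"
proof (rule inv_gensI)
  show "(1::nat, p - binv p b) \<noteq> (0, 0)" by simp
  show "is_invariant p b (1, p - binv p b)" using inv_1a[OF assms] .
  have bp: "0 < binv p b" using binv_prop[OF assms] by blast
  fix e1 e2 :: "nat \<times> nat"
  assume h: "e1 \<noteq> (0,0)" "e2 \<noteq> (0,0)" "is_invariant p b e1" "is_invariant p b e2"
    "fst (1::nat, p - binv p b) = fst e1 + fst e2" "snd (1::nat, p - binv p b) = snd e1 + snd e2"
  obtain x1 y1 x2 y2 where e: "e1 = (x1, y1)" "e2 = (x2, y2)" by fastforce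
  have "x1 = 0 \<or> x2 = 0" using h e by auto
  then show False
  proof
    assume "x1 = 0"
    then have "(b * y1) mod p = 0" "y1 \<noteq> 0" using h e unfolding is_invariant_def by auto
    then have "p \<le> y1" by (auto intro: prime_mul_mod0[OF assms])
    moreover have "y1 \<le> p - binv p b" using h e by auto
    ultimately show False using bp assms(3) by linarith
  next
    assume "x2 = 0"
    then have "(b * y2) mod p = 0" "y2 \<noteq> 0" using h e unfolding is_invariant_def by auto
    then have "p \<le> y2" by (auto intro: prime_mul_mod0[OF assms])
    moreover have "y2 \<le> p - binv p b" using h e by auto
    ultimately show False using bp assms(3) by linarith
  qed
qed

lemma bm1_sub:
  fixes p :: nat
  assumes "1 < p" "prime p"
  shows "inv_gens p (p - 1) \<subseteq> {(p,0),(1,1),(0,p)}"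
proof
  fix e assume e: "e \<in> inv_gens p (p - 1)"
  obtain x t where ex: "e = (x, t)" by fastforce
  have ne: "e \<noteq> (0,0)" and inv: "(x + (p - 1) * t) mod p = 0"
    using e ex unfolding inv_gens_def is_invariant_def by auto
  have nd: "\<not> (\<exists>e1 e2. e1 \<noteq> (0,0) \<and> e2 \<noteq> (0,0) \<and> is_invariant p (p - 1) e1 \<and> is_invariant p (p - 1) e2
            \<and> fst e = fst e1 + fst e2 \<and> snd e = snd e1 + snd e2)"
    using e unfolding inv_gens_def by blast
  have i11: "is_invariant p (p - 1) (1,1)" unfolding is_invariant_def using assms by simp
  have ip0: "is_invariant p (p - 1) (p,0)" unfolding is_invariant_def by simp
  have i0p: "is_invariant p (p - 1) (0,p)" unfolding is_invariant_def by simp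
  consider "x \<noteq> 0" "t \<noteq> 0" | "t = 0" | "x = 0" by blast
  then show "e \<in> {(p,0),(1,1),(0,p)}"
  proof cases
    case 1
    show ?thesis
    proof (rule ccontr)
      assume "e \<notin> {(p,0),(1,1),(0,p)}"
      then have ne2: "(x - 1, t - 1) \<noteq> (0,0)" using 1 ex by auto
      have "x + (p - 1) * t = (x - 1 + (p - 1) * (t - 1)) + p"
        using 1 assms by (cases t; cases x; cases p) (auto simp: algebra_simps)
      then have "(x - 1 + (p - 1) * (t - 1)) mod p = 0" using inv by simp
      then have "is_invariant p (p - 1) (x - 1, t - 1)" unfolding is_invariant_def by simp
      then have "\<exists>e1 e2. e1 \<noteq> (0,0) \<and> e2 \<noteq> (0,0) \<and> is_invariant p (p - 1) e1 \<and> is_invariant p (p - 1) e2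
            \<and> fst e = fst e1 + fst e2 \<and> snd e = snd e1 + snd e2"
        using ne2 i11 1 ex by (intro exI[of _ "(1,1)"] exI[of _ "(x - 1, t - 1)"]) auto
      then show False using nd by blast
    qed
  next
    case 2
    then have x0: "x mod p = 0" "x \<noteq> 0" using inv ne ex by auto
    show ?thesis
    proof (rule ccontr)
      assume "e \<notin> {(p,0),(1,1),(0,p)}"
      then have "x \<noteq> p" using 2 ex by auto
      moreover have "p \<le> x" using x0 by (auto intro: mod0_ge)
      ultimately have ne2: "(x - p, 0) \<noteq> (0,0)" by auto
      have "(x - p) mod p = 0" using x0 \<open>p \<le> x\<close> by (metis le_mod_geq)
      then have "is_invariant p (p - 1) (x - p, 0)" unfolding is_invariant_def by simp
      then have "\<exists>e1 e2. e1 \<noteq> (0,0) \<and> e2 \<noteq> (0,0) \<and> is_invariant p (p - 1) e1 \<and> is_invariant p (p - 1) e2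
            \<and> fst e = fst e1 + fst e2 \<and> snd e = snd e1 + snd e2"
        using ne2 ip0 2 ex \<open>p \<le> x\<close> assms by (intro exI[of _ "(p,0)"] exI[of _ "(x - p, 0)"]) auto
      then show False using nd by blast
    qed
  next
    case 3
    then have t0: "((p - 1) * t) mod p = 0" "t \<noteq> 0" using inv ne ex by auto
    have pt: "p \<le> t" using prime_mul_mod0[of p "p - 1" t] t0 assms by simp
    show ?thesis
    proof (rule ccontr)
      assume "e \<notin> {(p,0),(1,1),(0,p)}"
      then have "t \<noteq> p" using 3 ex by auto
      then have ne2: "(0, t - p) \<noteq> (0,0)" using pt by auto
      have "p dvd (p - 1) * t" using t0 mod_0_imp_dvd by blast
      moreover have "p dvd (p - 1) * p" by simp
      ultimately have "p dvd (p - 1) * t - (p - 1) * p" by (rule dvd_diff_nat)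
      then have "p dvd (p - 1) * (t - p)" by (simp add: diff_mult_distrib2)
      then have "is_invariant p (p - 1) (0, t - p)" unfolding is_invariant_def by simp
      then have "\<exists>e1 e2. e1 \<noteq> (0,0) \<and> e2 \<noteq> (0,0) \<and> is_invariant p (p - 1) e1 \<and> is_invariant p (p - 1) e2
            \<and> fst e = fst e1 + fst e2 \<and> snd e = snd e1 + snd e2"
        using ne2 i0p 3 ex pt assms by (intro exI[of _ "(0,p)"] exI[of _ "(0, t - p)"]) auto
      then show False using nd by blast
    qed
  qed
qed

lemma decomp:
  fixes p b a c :: nat
  assumes sub: "inv_gens p b \<subseteq> {(p,0),(c,1),(1,a),(0,p)}"
  shows "is_invariant p b e \<Longrightarrow> \<exists>\<alpha> \<beta> \<gamma> \<delta>. fst e = \<alpha>*p + \<beta>*c + \<gamma> \<and> snd e = \<beta> + \<gamma>*a + \<delta>*p"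
proof (induction "fst e + snd e" arbitrary: e rule: less_induct)
  case less
  show ?case
  proof (cases "e = (0,0)")
    case True
    then show ?thesis by (intro exI[of _ 0]) auto
  next
    case ne: False
    show ?thesis
    proof (cases "e \<in> inv_gens p b")
      case True
      then have "e \<in> {(p,0),(c,1),(1,a),(0,p)}" using sub by blast
      then consider "e = (p,0)" | "e = (c,1)" | "e = (1,a)" | "e = (0,p)" by blast
      then show ?thesis
      proof cases
        case 1 then show ?thesis by (intro exI[of _ 1] exI[of _ 0]) auto
      next
        case 2 then show ?thesis by (intro exI[of _ 0] exI[of _ 1] exI[of _ 0] exI[of _ 0]) auto
      next
        case 3 then show ?thesis by (intro exI[of _ 0] exI[of _ 0] exI[of _ 1] exI[of _ 0]) auto
      next
        case 4 then show ?thesis by (intro exI[of _ 0] exI[of _ 0] exI[of _ 0] exI[of _ 1]) auto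
      qed
    next
      case False
      then obtain e1 e2 where h: "e1 \<noteq> (0,0)" "e2 \<noteq> (0,0)" "is_invariant p b e1" "is_invariant p b e2"
            "fst e = fst e1 + fst e2" "snd e = snd e1 + snd e2"
        using ne less.prems unfolding inv_gens_def by blast
      have "fst e1 + snd e1 > 0" using h(1) by (cases e1) auto
      moreover have "fst e2 + snd e2 > 0" using h(2) by (cases e2) auto
      ultimately have s1: "fst e1 + snd e1 < fst e + snd e" and s2: "fst e2 + snd e2 < fst e + snd e"
        using h(5,6) by linarith+
      obtain a1 b1 g1 d1 where c1: "fst e1 = a1*p + b1*c + g1" "snd e1 = b1 + g1*a + d1*p"
        using less.hyps[OF s1 h(3)] by blast
      obtain a2 b2 g2 d2 where c2: "fst e2 = a2*p + b2*c + g2" "snd e2 = b2 + g2*a + d2*p"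
        using less.hyps[OF s2 h(4)] by blast
      show ?thesis using h c1 c2
        by (intro exI[of _ "a1 + a2"] exI[of _ "b1 + b2"] exI[of _ "g1 + g2"] exI[of _ "d1 + d2"])
          (simp add: algebra_simps)
    qed
  qed
qed

lemma gens4:
  fixes p b :: nat
  assumes pr: "prime p" and b0: "0 < b" and bp: "b < p" and card4: "card (inv_gens p b) = 4"
  shows "\<exists>a c. zs p b = [(p,0),(c,1),(1,a),(0,p)] \<and> binv p b + a = p \<and> b + c = p
            \<and> a * c = p + 1 \<and> 2 \<le> a \<and> 2 \<le> c"
proof -
  define B where "B = binv p b"
  define a where "a = p - B"
  define c where "c = p - b"
  have Bp: "0 < B \<and> B < p \<and> (b * B) mod p = 1" using binv_prop[OF pr b0 bp] unfolding B_def .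
  have p1: "p > 1" using pr prime_gt_1_nat by blast
  have fin: "finite (inv_gens p b)" using card4 card_ge_0_finite by force
  have c1: "c \<noteq> 1"
  proof
    assume "c = 1"
    then have "b = p - 1" unfolding c_def using bp by simp
    then have "inv_gens p b \<subseteq> {(p,0),(1,1),(0,p)}" using bm1_sub[OF p1 pr] by simp
    then have "card (inv_gens p b) \<le> card {(p,0),(1::nat,1::nat),(0,p)}" by (rule card_mono[rotated]) simp
    also have "\<dots> \<le> 3" by (rule card_insert_le_m1) (auto simp: card_insert_if)
    finally show False using card4 by simp
  qed
  have a1: "a \<noteq> 1"
  proof
    assume "a = 1"
    then have BB: "B = p - 1" unfolding a_def using Bp by simp
    have "b * (p - 1) + b = b * p" using p1 by (cases p) (auto simp: algebra_simps)
    then have "(b * (p - 1) + b) mod p = 0" by simp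
    then have "(1 + b) mod p = 0" using Bp BB by (metis mod_add_left_eq)
    then have "p \<le> 1 + b" by (auto intro: mod0_ge)
    then have "c = 1" unfolding c_def using bp by simp
    then show False using c1 by simp
  qed
  have "B < p" using Bp by simp
  then have a2: "2 \<le> a" using a1 unfolding a_def by linarith
  have c2: "2 \<le> c" using c1 bp unfolding c_def by linarith
  have ap: "a < p" "c < p" unfolding a_def c_def using Bp b0 by auto
  have sub: "{(p,0),(c,1),(1,a),(0,p)} \<subseteq> inv_gens p b"
    using mem_p0[OF pr b0 bp] mem_0p[OF pr b0 bp] mem_c1[OF pr b0 bp] mem_1a[OF pr b0 bp]
    unfolding a_def c_def B_def by auto
  have card4': "card {(p,0),(c,1),(1,a),(0,p)} = 4" using a2 c2 ap by auto
  have eq: "inv_gens p b = {(p,0),(c,1),(1,a),(0,p)}"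
    using card_subset_eq[OF fin sub] card4 card4' by simp
  have inv: "is_invariant p b (1 + b, a - 1)"
  proof -
    have "(1 + b * a) mod p = 0" using inv_1a[OF pr b0 bp] unfolding is_invariant_def a_def B_def by simp
    moreover have "1 + b + b * (a - 1) = 1 + b * a" using a2 by (cases a) (auto simp: algebra_simps)
    ultimately show ?thesis unfolding is_invariant_def by simp
  qed
  obtain \<alpha> \<beta> \<gamma> \<delta> where co: "1 + b = \<alpha>*p + \<beta>*c + \<gamma>" "a - 1 = \<beta> + \<gamma>*a + \<delta>*p"
    using decomp[of p b c a, OF eq[THEN equalityD1] inv] by auto
  have g0: "\<gamma> = 0"
  proof (rule ccontr)
    assume "\<gamma> \<noteq> 0"
    then have "a \<le> \<gamma> * a" by simp
    then show False using co(2) a2 by linarith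
  qed
  have d0: "\<delta> = 0"
  proof (rule ccontr)
    assume "\<delta> \<noteq> 0"
    then have "p \<le> \<delta> * p" by simp
    then show False using co(2) ap by linarith
  qed
  have "\<beta> = a - 1" using co(2) g0 d0 by simp
  then have "(a - 1) * c \<le> 1 + b" using co(1) g0 by simp
  moreover have "(a - 1) * c + c = a * c" using a2 by (cases a) (auto simp: algebra_simps)
  ultimately have le: "a * c \<le> p + 1" unfolding c_def using bp by linarith
  have ia: "int a = int p - int B" unfolding a_def using Bp by (simp add: of_nat_diff)
  have ic: "int c = int p - int b" unfolding c_def using bp by (simp add: of_nat_diff)
  have "int (a * c) = int (b * B) + int p * (int p - int B - int b)"
    unfolding of_nat_mult ia ic by (simp add: algebra_simps)
  then have "int (a * c) mod int p = int (b * B) mod int p" by simp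
  also have "\<dots> = 1" using Bp by (metis of_nat_1 of_nat_mod)
  finally have acm: "(a * c) mod p = 1" by (metis of_nat_1 of_nat_eq_iff of_nat_mod)
  have "a * c \<ge> 4" using a2 c2 mult_le_mono by fastforce
  then have "a * c \<ge> p + 1"
  proof -
    have "a * c = p * (a * c div p) + 1" using acm by (metis mult_div_mod_eq)
    moreover have "a * c div p \<noteq> 0"
    proof
      assume "a * c div p = 0"
      then have "a * c = 1" using calculation by simp
      then show False using \<open>a * c \<ge> 4\<close> by simp
    qed
    moreover have "p \<le> p * (a * c div p)" using calculation(2) by simp
    ultimately show ?thesis by linarith
  qed
  then have ac: "a * c = p + 1" using le by simp
  have "sorted [(0,p),(1,a),(c,1),(p,0)]" using c2 ap by (auto simp: less_eq_prod_def)
  moreover have "distinct [(0,p),(1,a),(c,1),(p,0)]" using c2 ap a2 by auto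
  ultimately have L: "sorted_list_of_set (set [(0,p),(1,a),(c,1),(p,0)]) = [(0,p),(1,a),(c,1),(p,0)]"
    by (rule sorted_list_of_set.idem_if_sorted_distinct)
  have S: "inv_gens p b = set [(0,p),(1,a),(c,1),(p,0)]" using eq by auto
  have "zs p b = [(p,0),(c,1),(1,a),(0,p)]" unfolding zs_def by (simp only: S L) simp
  moreover have "binv p b + a = p" using Bp unfolding a_def B_def by simp
  moreover have "b + c = p" using bp unfolding c_def by simp
  ultimately show ?thesis using ac a2 c2 by blast
qed

definition Lin :: "('a \<Rightarrow> 'b) \<Rightarrow> ('a \<Rightarrow>\<^sub>0 complex) \<Rightarrow> ('b \<Rightarrow>\<^sub>0 complex)" where
  "Lin \<Theta> f = (\<Sum>m\<in>Poly_Mapping.keys f. Poly_Mapping.single (\<Theta> m) (Poly_Mapping.lookup f m))"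

lemma Lin_superset:
  assumes "finite K" "Poly_Mapping.keys f \<subseteq> K"
  shows "Lin \<Theta> f = (\<Sum>m\<in>K. Poly_Mapping.single (\<Theta> m) (Poly_Mapping.lookup f m))"
  unfolding Lin_def
  by (rule sum.mono_neutral_left) (use assms in \<open>auto simp: in_keys_iff\<close>)

lemma Lin_add: "Lin \<Theta> (f + g) = Lin \<Theta> f + Lin \<Theta> g"
proof -
  let ?K = "Poly_Mapping.keys f \<union> Poly_Mapping.keys g"
  have "Lin \<Theta> (f + g) = (\<Sum>m\<in>?K. Poly_Mapping.single (\<Theta> m) (Poly_Mapping.lookup (f + g) m))"
    by (rule Lin_superset) (auto simp: keys_add)
  also have "\<dots> = (\<Sum>m\<in>?K. Poly_Mapping.single (\<Theta> m) (Poly_Mapping.lookup f m))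
                 + (\<Sum>m\<in>?K. Poly_Mapping.single (\<Theta> m) (Poly_Mapping.lookup g m))"
    by (simp add: lookup_add single_add sum.distrib)
  also have "\<dots> = Lin \<Theta> f + Lin \<Theta> g"
    by (simp add: Lin_superset[symmetric])
  finally show ?thesis .
qed

lemma Lin_uminus: "Lin \<Theta> (- f) = - Lin \<Theta> f"
  unfolding Lin_def by (simp add: single_uminus sum_negf keys_def)

lemma Lin_diff: "Lin \<Theta> (f - g) = Lin \<Theta> f - Lin \<Theta> g"
  using Lin_add[of \<Theta> f "- g"] Lin_uminus[of \<Theta> g] by simp

lemma Lin_zero [simp]: "Lin \<Theta> 0 = 0"
  unfolding Lin_def by simp

lemma Lin_single [simp]: "Lin \<Theta> (Poly_Mapping.single m x) = Poly_Mapping.single (\<Theta> m) x"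
  unfolding Lin_def by (cases "x = 0") auto

lemma Lin_sum: "Lin \<Theta> (sum h A) = (\<Sum>i\<in>A. Lin \<Theta> (h i))"
  by (induction A rule: infinite_finite_induct) (auto simp: Lin_add)

lemma pm_expand: "f = (\<Sum>m\<in>Poly_Mapping.keys f. Poly_Mapping.single m (Poly_Mapping.lookup f m))"
proof (rule poly_mapping_eqI)
  fix k
  have "Poly_Mapping.lookup (\<Sum>m\<in>Poly_Mapping.keys f. Poly_Mapping.single m (Poly_Mapping.lookup f m)) k
     = (\<Sum>m\<in>Poly_Mapping.keys f. (Poly_Mapping.lookup f m when m = k))"
    by (simp add: lookup_sum lookup_single)
  also have "\<dots> = Poly_Mapping.lookup f k"
    by (simp add: when_def in_keys_iff)
  finally show "Poly_Mapping.lookup f k = Poly_Mapping.lookup (\<Sum>m\<in>Poly_Mapping.keys f. Poly_Mapping.single m (Poly_Mapping.lookup f m)) k" by simp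
qed

lemma Lin_mult:
  fixes \<Theta> :: "'a::monoid_add \<Rightarrow> 'b::monoid_add"
  assumes add: "\<And>m n. \<Theta> (m + n) = \<Theta> m + \<Theta> n"
  shows "Lin \<Theta> (f * g) = Lin \<Theta> f * Lin \<Theta> g"
proof -
  let ?F = "Poly_Mapping.keys f" and ?G = "Poly_Mapping.keys g"
  have "f * g = (\<Sum>m\<in>?F. Poly_Mapping.single m (Poly_Mapping.lookup f m)) * (\<Sum>n\<in>?G. Poly_Mapping.single n (Poly_Mapping.lookup g n))"
    using pm_expand[of f] pm_expand[of g] by simp
  also have "\<dots> = (\<Sum>m\<in>?F. \<Sum>n\<in>?G. Poly_Mapping.single (m + n) (Poly_Mapping.lookup f m * Poly_Mapping.lookup g n))"
    by (simp add: sum_product mult_single)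
  finally have fg: "f * g = \<dots>" .
  have "Lin \<Theta> (f * g) = (\<Sum>m\<in>?F. \<Sum>n\<in>?G. Poly_Mapping.single (\<Theta> m + \<Theta> n) (Poly_Mapping.lookup f m * Poly_Mapping.lookup g n))"
    unfolding fg by (simp add: Lin_sum add)
  also have "\<dots> = (\<Sum>m\<in>?F. Poly_Mapping.single (\<Theta> m) (Poly_Mapping.lookup f m)) * (\<Sum>n\<in>?G. Poly_Mapping.single (\<Theta> n) (Poly_Mapping.lookup g n))"
    by (simp add: sum_product mult_single)
  also have "\<dots> = Lin \<Theta> f * Lin \<Theta> g" unfolding Lin_def ..
  finally show ?thesis .
qed

lemma lookup_Lin_inj:
  assumes "inj_on \<Theta> A" "Poly_Mapping.keys h \<subseteq> A" "n \<in> A"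
  shows "Poly_Mapping.lookup (Lin \<Theta> h) (\<Theta> n) = Poly_Mapping.lookup h n"
proof -
  have "Poly_Mapping.lookup (Lin \<Theta> h) (\<Theta> n) = (\<Sum>m\<in>Poly_Mapping.keys h. (Poly_Mapping.lookup h m when \<Theta> m = \<Theta> n))"
    unfolding Lin_def by (simp add: lookup_sum lookup_single)
  also have "\<dots> = (\<Sum>m\<in>Poly_Mapping.keys h. (Poly_Mapping.lookup h m when m = n))"
    by (rule sum.cong) (use assms in \<open>auto simp: when_def inj_on_def\<close>)
  also have "\<dots> = Poly_Mapping.lookup h n"
    by (simp add: when_def in_keys_iff)
  finally show ?thesis .
qed

definition LT :: "Rpoly \<Rightarrow> (4 \<Rightarrow>\<^sub>0 nat)" where
  "LT f = Max (Poly_Mapping.keys f)"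

lemma LT_in: "f \<noteq> 0 \<Longrightarrow> LT f \<in> Poly_Mapping.keys f"
  unfolding LT_def by (rule Max_in) auto

lemma LT_ge: "k \<in> Poly_Mapping.keys f \<Longrightarrow> k \<le> LT f"
  unfolding LT_def by (rule Max_ge) auto

lemma LT_mult:
  fixes f g :: Rpoly
  assumes "f \<noteq> 0" "g \<noteq> 0"
  shows "LT (f * g) = LT f + LT g"
proof -
  define Lf where "Lf = LT f"
  define Lg where "Lg = LT g"
  define cf where "cf = Poly_Mapping.lookup f Lf"
  define cg where "cg = Poly_Mapping.lookup g Lg"
  define f' where "f' = f - Poly_Mapping.single Lf cf"
  define g' where "g' = g - Poly_Mapping.single Lg cg"
  have cf0: "cf \<noteq> 0" unfolding cf_def Lf_def using LT_in[OF assms(1)] by (simp add: in_keys_iff)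
  have cg0: "cg \<noteq> 0" unfolding cg_def Lg_def using LT_in[OF assms(2)] by (simp add: in_keys_iff)
  have kf': "k < Lf" if "k \<in> Poly_Mapping.keys f'" for k
  proof -
    have "k \<in> Poly_Mapping.keys f" "k \<noteq> Lf" using that unfolding f'_def cf_def
      by (auto simp: in_keys_iff lookup_minus lookup_single when_def split: if_splits)
    then show ?thesis using LT_ge[of k f] unfolding Lf_def by auto
  qed
  have kg': "k < Lg" if "k \<in> Poly_Mapping.keys g'" for k
  proof -
    have "k \<in> Poly_Mapping.keys g" "k \<noteq> Lg" using that unfolding g'_def cg_def
      by (auto simp: in_keys_iff lookup_minus lookup_single when_def split: if_splits)
    then show ?thesis using LT_ge[of k g] unfolding Lg_def by auto
  qed
  have kg: "k \<le> Lg" if "k \<in> Poly_Mapping.keys g" for k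
    using LT_ge[OF that] unfolding Lg_def .
  have kf: "k \<le> Lf" if "k \<in> Poly_Mapping.keys f" for k
    using LT_ge[OF that] unfolding Lf_def .
  have fe: "f = Poly_Mapping.single Lf cf + f'" unfolding f'_def by simp
  have ge: "g = Poly_Mapping.single Lg cg + g'" unfolding g'_def by simp
  have prod: "f * g = Poly_Mapping.single (Lf + Lg) (cf * cg) + Poly_Mapping.single Lf cf * g' + f' * g"
  proof -
    have "f * g = Poly_Mapping.single Lf cf * g + f' * g" using fe by (metis distrib_right)
    also have "Poly_Mapping.single Lf cf * g = Poly_Mapping.single Lf cf * (Poly_Mapping.single Lg cg + g')"
      using ge by metis
    finally show ?thesis by (simp add: distrib_left mult_single)
  qed
  have z1: "Poly_Mapping.lookup (Poly_Mapping.single Lf cf * g') (Lf + Lg) = 0"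
  proof -
    have "Lf + Lg \<notin> Poly_Mapping.keys (Poly_Mapping.single Lf cf * g')"
    proof
      assume "Lf + Lg \<in> Poly_Mapping.keys (Poly_Mapping.single Lf cf * g')"
      then obtain u v where "u \<in> Poly_Mapping.keys (Poly_Mapping.single Lf cf)" "v \<in> Poly_Mapping.keys g'" "Lf + Lg = u + v"
        using keys_mult by blast
      then have "u = Lf" "v < Lg" using kg' by (auto split: if_splits)
      then have "u + v < Lf + Lg" by (simp add: add_strict_left_mono)
      then show False using \<open>Lf + Lg = u + v\<close> by simp
    qed
    then show ?thesis by (simp add: in_keys_iff)
  qed
  have z2: "Poly_Mapping.lookup (f' * g) (Lf + Lg) = 0"
  proof -
    have "Lf + Lg \<notin> Poly_Mapping.keys (f' * g)"
    proof
      assume "Lf + Lg \<in> Poly_Mapping.keys (f' * g)"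
      then obtain u v where "u \<in> Poly_Mapping.keys f'" "v \<in> Poly_Mapping.keys g" "Lf + Lg = u + v"
        using keys_mult by blast
      then have "u < Lf" "v \<le> Lg" using kf' kg by auto
      then have "u + v < Lf + Lg" by (simp add: add_less_le_mono)
      then show False using \<open>Lf + Lg = u + v\<close> by simp
    qed
    then show ?thesis by (simp add: in_keys_iff)
  qed
  have top: "Poly_Mapping.lookup (f * g) (Lf + Lg) = cf * cg"
    unfolding prod by (simp add: lookup_add z1 z2)
  have inkeys: "Lf + Lg \<in> Poly_Mapping.keys (f * g)" using top cf0 cg0 by (simp add: in_keys_iff)
  have le: "k \<le> Lf + Lg" if "k \<in> Poly_Mapping.keys (f * g)" for k
  proof -
    obtain u v where "u \<in> Poly_Mapping.keys f" "v \<in> Poly_Mapping.keys g" "k = u + v"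
      using keys_mult \<open>k \<in> Poly_Mapping.keys (f * g)\<close> by blast
    then show ?thesis using kf kg by (simp add: add_mono)
  qed
  show ?thesis unfolding LT_def[of "f * g"] Lf_def[symmetric] Lg_def[symmetric]
    by (rule Max_eqI) (use inkeys le in auto)
qed

lemma std_inj_int:
  fixes p a c m0 m1 m2 m3 n0 n1 n2 n3 :: int
  assumes ac: "a * c = p + 1" and a2: "2 \<le> a" and c2: "2 \<le> c" and p0: "0 < p"
    and nn: "0 \<le> m0" "0 \<le> m1" "0 \<le> m2" "0 \<le> m3" "0 \<le> n0" "0 \<le> n1" "0 \<le> n2" "0 \<le> n3"
    and E1: "p * m0 + c * m1 + m2 = p * n0 + c * n1 + n2"
    and E2: "m1 + a * m2 + p * m3 = n1 + a * n2 + p * n3"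
    and sm: "m0 = 0 \<or> m2 = 0" "m1 = 0 \<or> m3 = 0" "m0 = 0 \<or> m3 = 0"
    and sn: "n0 = 0 \<or> n2 = 0" "n1 = 0 \<or> n3 = 0" "n0 = 0 \<or> n3 = 0"
  shows "m0 = n0 \<and> m1 = n1 \<and> m2 = n2 \<and> m3 = n3"
proof -
  define d0 where "d0 = m0 - n0"
  define d1 where "d1 = m1 - n1"
  define d2 where "d2 = m2 - n2"
  define d3 where "d3 = m3 - n3"
  have L1: "p * d0 + c * d1 + d2 = 0" using E1 unfolding d0_def d1_def d2_def by (simp add: algebra_simps)
  have L2: "d1 + a * d2 + p * d3 = 0" using E2 unfolding d3_def d1_def d2_def by (simp add: algebra_simps)
  have "p * (d3 - a * d0 - d1) = (d1 + a * d2 + p * d3) - a * (p * d0 + c * d1 + d2) + (a * c - (p + 1)) * d1"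
    by (simp add: algebra_simps)
  then have "p * (d3 - a * d0 - d1) = 0" using L1 L2 ac by simp
  then have D1: "d1 = d3 - a * d0" using p0 by simp
  have "d2 = - p * d0 - c * d1" using L1 by simp
  also have "\<dots> = - p * d0 - c * d3 + (a * c) * d0" unfolding D1 by (simp add: algebra_simps)
  also have "\<dots> = d0 - c * d3" unfolding ac by (simp add: algebra_simps)
  finally have D2: "d2 = d0 - c * d3" .
  have e1: "m1 - n1 = m3 - n3 - a * m0 + a * n0" using D1 unfolding d0_def d1_def d3_def by (simp add: algebra_simps)
  have e2: "m2 - n2 = m0 - n0 - c * m3 + c * n3" using D2 unfolding d0_def d2_def d3_def by (simp add: algebra_simps)
  have b1: "m0 \<le> a * m0" "n0 \<le> a * n0" "m3 \<le> c * m3" "n3 \<le> c * n3"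
    using nn a2 c2 by (simp_all add: mult_right_mono[of 1 a, simplified] mult_right_mono[of 1 c, simplified])
  have b2: "m0 = 0 \<longleftrightarrow> a * m0 = 0" "n0 = 0 \<longleftrightarrow> a * n0 = 0" "m3 = 0 \<longleftrightarrow> c * m3 = 0" "n3 = 0 \<longleftrightarrow> c * n3 = 0"
    using a2 c2 by auto
  have fm: "(m2 = 0 \<and> m3 = 0) \<or> (m0 = 0 \<and> m3 = 0) \<or> (m0 = 0 \<and> m1 = 0)" using sm by blast
  have fn: "(n2 = 0 \<and> n3 = 0) \<or> (n0 = 0 \<and> n3 = 0) \<or> (n0 = 0 \<and> n1 = 0)" using sn by blast
  from fm fn show ?thesis
    using e1 e2 b1 b2 nn by (elim disjE conjE; smt (verit))
qed

definition Y :: "(4 \<Rightarrow>\<^sub>0 nat) \<Rightarrow> Rpoly" where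
  "Y m = Poly_Mapping.single m 1"

lemma Y_mult: "Y m * Y n = Y (m + n)"
  unfolding Y_def by (simp add: mult_single)

lemma y_Y: "y v = Y (Poly_Mapping.single v 1)"
  unfolding y_def Y_def ..

lemma y_pow: "y v ^ k = Y (Poly_Mapping.single v k)"
proof (induction k)
  case 0
  then show ?case by (simp add: Y_def)
next
  case (Suc k)
  then show ?case by (simp add: y_Y Y_mult single_add[symmetric] add.commute)
qed

lemma xmon_mult: "xmon e * xmon e' = xmon (fst e + fst e', snd e + snd e')"
  unfolding xmon_def by (simp add: mult_single single_add algebra_simps)

lemma xmon_zero: "xmon (0, 0) = 1"
  unfolding xmon_def by simp

lemma xmon_pow: "xmon e ^ k = xmon (k * fst e, k * snd e)"
proof (induction k)
  case 0
  then show ?case by (simp add: xmon_zero)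
next
  case (Suc k)
  then show ?case by (simp add: xmon_mult)
qed

lemma xmon_prod: "(\<Prod>v\<in>K. xmon (g v)) = xmon (\<Sum>v\<in>K. fst (g v), \<Sum>v\<in>K. snd (g v))"
proof (induction K rule: infinite_finite_induct)
  case (infinite A)
  then show ?case by (simp add: xmon_zero)
next
  case empty
  then show ?case by (simp add: xmon_zero)
next
  case (insert x F)
  then show ?case by (simp add: xmon_mult)
qed

locale tor =
  fixes p b a c :: nat
  assumes zsv: "zs p b = [(p,0),(c,1),(1,a),(0,p)]"
    and binv_a: "binv p b + a = p" and bc: "b + c = p"
    and ac: "a * c = p + 1" and a2: "2 \<le> a" and c2: "2 \<le> c"
begin

definition Psi :: "(4 \<Rightarrow>\<^sub>0 nat) \<Rightarrow> nat \<times> nat" where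
  "Psi m = (p * Poly_Mapping.lookup m 0 + c * Poly_Mapping.lookup m 1 + Poly_Mapping.lookup m 2,
            Poly_Mapping.lookup m 1 + a * Poly_Mapping.lookup m 2 + p * Poly_Mapping.lookup m 3)"

definition Th :: "(4 \<Rightarrow>\<^sub>0 nat) \<Rightarrow> (nat \<Rightarrow>\<^sub>0 nat)" where
  "Th m = Poly_Mapping.single 0 (fst (Psi m)) + Poly_Mapping.single 1 (snd (Psi m))"

lemma Th_add: "Th (m + n) = Th m + Th n"
  unfolding Th_def Psi_def by (simp add: lookup_add single_add algebra_simps)

lemma zs_nth: "zs p b ! var_index v = (if v = 0 then (p,0) else if v = 1 then (c,1) else if v = 2 then (1,a) else (0,p))"
  unfolding zsv var_index_def by simp

lemma mon_image: "(\<Prod>v\<in>Poly_Mapping.keys m. xmon (zs p b ! var_index v) ^ Poly_Mapping.lookup m v)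
     = Poly_Mapping.single (Th m) 1"
proof -
  let ?g = "\<lambda>v. (Poly_Mapping.lookup m v * fst (zs p b ! var_index v), Poly_Mapping.lookup m v * snd (zs p b ! var_index v))"
  have "(\<Prod>v\<in>Poly_Mapping.keys m. xmon (zs p b ! var_index v) ^ Poly_Mapping.lookup m v)
      = (\<Prod>v\<in>Poly_Mapping.keys m. xmon (?g v))" by (simp add: xmon_pow)
  also have "\<dots> = xmon (\<Sum>v\<in>Poly_Mapping.keys m. fst (?g v), \<Sum>v\<in>Poly_Mapping.keys m. snd (?g v))"
    by (rule xmon_prod)
  also have "(\<Sum>v\<in>Poly_Mapping.keys m. fst (?g v)) = (\<Sum>v\<in>UNIV. fst (?g v))"
    by (rule sum.mono_neutral_left) (auto simp: in_keys_iff)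
  also have "(\<Sum>v\<in>Poly_Mapping.keys m. snd (?g v)) = (\<Sum>v\<in>UNIV. snd (?g v))"
    by (rule sum.mono_neutral_left) (auto simp: in_keys_iff)
  also have "xmon (\<Sum>v\<in>UNIV. fst (?g v), \<Sum>v\<in>UNIV. snd (?g v)) = xmon (Psi m)"
    unfolding UNIV4 Psi_def by (simp add: zs_nth algebra_simps)
  also have "\<dots> = Poly_Mapping.single (Th m) 1" unfolding xmon_def Th_def ..
  finally show ?thesis .
qed

lemma phi_Lin: "phi p b f = Lin Th f"
  unfolding phi_def Lin_def mon_image by (simp add: mult_single)

lemma phi_mult: "phi p b (f * g) = phi p b f * phi p b g"
  unfolding phi_Lin by (rule Lin_mult) (rule Th_add)

abbreviation sg :: "4 \<Rightarrow> nat \<Rightarrow> (4 \<Rightarrow>\<^sub>0 nat)" where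
  "sg v k \<equiv> Poly_Mapping.single v k"

lemma pa: "p - binv p b = a" using binv_a by simp
lemma pc: "p - b = c" using bc by simp
lemma p_pos: "0 < p"
proof -
  have "2 * 2 \<le> a * c" using mult_le_mono[OF a2 c2] .
  then show ?thesis using ac by linarith
qed

lemma yy: "y u * y v = Y (sg u 1 + sg v 1)"
  by (simp add: y_Y Y_mult)

lemma D1_0: "D1 p b 0 = Y (sg 1 a) - Y (sg 0 1 + sg 2 1)"
  unfolding D1_def pa by (simp add: y_pow yy)

lemma D1_1: "D1 p b 1 = Y (sg 2 c) - Y (sg 1 1 + sg 3 1)"
  unfolding D1_def pc by (simp add: y_pow yy)

lemma D1_2: "D1 p b 2 = Y (sg 1 (a - 1) + sg 2 (c - 1)) - Y (sg 0 1 + sg 3 1)"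
  unfolding D1_def pa pc by (simp add: y_pow yy Y_mult)

lemma Psi_add: "Psi (m + n) = (fst (Psi m) + fst (Psi n), snd (Psi m) + snd (Psi n))"
  unfolding Psi_def by (simp add: lookup_add algebra_simps)

lemma Psi_sg: "Psi (sg v k) = (if v = 0 then (p * k, 0) else if v = 1 then (c * k, k) else if v = 2 then (k, a * k) else (0, p * k))"
  using four_cases[of v] unfolding Psi_def by (auto simp: lookup_single)

lemma Psi_rel0: "Psi (sg 1 a) = Psi (sg 0 1 + sg 2 1)"
proof -
  have "Psi (sg 1 a) = (c * a, a)" by (simp add: Psi_sg)
  moreover have "Psi (sg 0 1 + sg 2 1) = (p + 1, a)" by (simp add: Psi_add Psi_sg)
  moreover have "c * a = p + 1" using ac by (simp only: mult.commute)
  ultimately show ?thesis by simp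
qed

lemma Psi_rel1: "Psi (sg 2 c) = Psi (sg 1 1 + sg 3 1)"
proof -
  have "Psi (sg 2 c) = (c, a * c)" by (simp add: Psi_sg)
  moreover have "Psi (sg 1 1 + sg 3 1) = (c, 1 + p)" by (simp add: Psi_add Psi_sg)
  ultimately show ?thesis using ac by simp
qed

lemma Psi_rel2: "Psi (sg 1 (a - 1) + sg 2 (c - 1)) = Psi (sg 0 1 + sg 3 1)"
proof -
  have h1: "c * (a - 1) + c = a * c" using a2 by (cases a) (auto simp: algebra_simps)
  have h2: "a * (c - 1) + a = a * c" using c2 by (cases c) (auto simp: algebra_simps)
  have "c * (a - 1) + (c - 1) = p" "(a - 1) + a * (c - 1) = p"
    using h1 h2 ac a2 c2 by linarith+
  then show ?thesis by (simp add: Psi_add Psi_sg)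
qed

lemma Th_eq: "Psi u = Psi w \<Longrightarrow> Th u = Th w"
  unfolding Th_def by simp

lemma Lin_binom: "Psi u = Psi w \<Longrightarrow> Lin Th (Y u - Y w) = 0"
proof -
  assume "Psi u = Psi w"
  then have "Th u = Th w" by (rule Th_eq)
  then show ?thesis unfolding Y_def Lin_diff Lin_single by simp
qed

lemma Lin_D1_0: "Lin Th (D1 p b 0) = 0"
  unfolding D1_0 by (rule Lin_binom, rule Psi_rel0)
lemma Lin_D1_1: "Lin Th (D1 p b 1) = 0"
  unfolding D1_1 by (rule Lin_binom, rule Psi_rel1)
lemma Lin_D1_2: "Lin Th (D1 p b 2) = 0"
  unfolding D1_2 by (rule Lin_binom, rule Psi_rel2)
lemmas Lin_D1 = Lin_D1_0 Lin_D1_1 Lin_D1_2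

lemma Psi_cong: "Psi u = Psi w \<Longrightarrow> Psi (m' + u) = Psi (m' + w)"
  by (simp add: Psi_add)

lemma range_sub_ker: "phi p b (partial1 p b t) = 0"
  unfolding phi_Lin partial1_def
  by (simp only: Lin_add Lin_mult[OF Th_add] Lin_D1 mult_zero_left add_0)

definition II :: "Rpoly set" where "II = range (partial1 p b)"

lemma II_add: "x \<in> II \<Longrightarrow> z \<in> II \<Longrightarrow> x + z \<in> II"
proof -
  assume "x \<in> II" "z \<in> II"
  then obtain t s where "x = partial1 p b t" "z = partial1 p b s" unfolding II_def by auto
  then have "x + z = partial1 p b (fst t + fst s, fst (snd t) + fst (snd s), snd (snd t) + snd (snd s))"
    unfolding partial1_def by (simp add: algebra_simps)
  then show ?thesis unfolding II_def by blast
qed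

lemma II_mult: "x \<in> II \<Longrightarrow> r * x \<in> II"
proof -
  assume "x \<in> II"
  then obtain t where "x = partial1 p b t" unfolding II_def by auto
  then have "r * x = partial1 p b (r * fst t, r * fst (snd t), r * snd (snd t))"
    unfolding partial1_def by (simp add: algebra_simps)
  then show ?thesis unfolding II_def by blast
qed

lemma II_zero: "0 \<in> II"
proof -
  have "0 = partial1 p b (0, 0, 0)" unfolding partial1_def by simp
  then show ?thesis unfolding II_def by blast
qed

lemma II_uminus: "x \<in> II \<Longrightarrow> - x \<in> II"
  using II_mult[of x "-1"] by simp

lemma II_diff: "x \<in> II \<Longrightarrow> z \<in> II \<Longrightarrow> x - z \<in> II"
  using II_add[of x "- z"] II_uminus[of z] by simp

lemma II_sum: "(\<And>i. i \<in> A \<Longrightarrow> h i \<in> II) \<Longrightarrow> sum h A \<in> II"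
  by (induction A rule: infinite_finite_induct) (auto simp: II_zero II_add)

lemma II_D: "D1 p b 0 \<in> II" "D1 p b 1 \<in> II" "D1 p b 2 \<in> II"
proof -
  have "D1 p b 0 = partial1 p b (1, 0, 0)" "D1 p b 1 = partial1 p b (0, 1, 0)" "D1 p b 2 = partial1 p b (0, 0, 1)"
    unfolding partial1_def by simp_all
  then show "D1 p b 0 \<in> II" "D1 p b 1 \<in> II" "D1 p b 2 \<in> II" unfolding II_def by (metis rangeI)+
qed

lemma II_ker: "x \<in> II \<Longrightarrow> Lin Th x = 0"
  unfolding II_def using range_sub_ker phi_Lin by auto

definition std :: "(4 \<Rightarrow>\<^sub>0 nat) \<Rightarrow> bool" where
  "std m \<longleftrightarrow> (Poly_Mapping.lookup m 0 = 0 \<or> Poly_Mapping.lookup m 2 = 0)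
      \<and> (Poly_Mapping.lookup m 1 = 0 \<or> Poly_Mapping.lookup m 3 = 0)
      \<and> (Poly_Mapping.lookup m 0 = 0 \<or> Poly_Mapping.lookup m 3 = 0)"

lemma pm4_eqI:
  fixes m n :: "4 \<Rightarrow>\<^sub>0 nat"
  assumes "Poly_Mapping.lookup m 0 = Poly_Mapping.lookup n 0" "Poly_Mapping.lookup m 1 = Poly_Mapping.lookup n 1"
    "Poly_Mapping.lookup m 2 = Poly_Mapping.lookup n 2" "Poly_Mapping.lookup m 3 = Poly_Mapping.lookup n 3"
  shows "m = n"
proof (rule poly_mapping_eqI)
  fix v :: 4
  from four_cases[of v] show "Poly_Mapping.lookup m v = Poly_Mapping.lookup n v"
    using assms by (elim disjE) simp_all
qed

lemma std_inj: "std m \<Longrightarrow> std n \<Longrightarrow> Psi m = Psi n \<Longrightarrow> m = n"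
proof -
  assume sm: "std m" and sn: "std n" and e: "Psi m = Psi n"
  have E1: "int p * int (Poly_Mapping.lookup m 0) + int c * int (Poly_Mapping.lookup m 1) + int (Poly_Mapping.lookup m 2)
       = int p * int (Poly_Mapping.lookup n 0) + int c * int (Poly_Mapping.lookup n 1) + int (Poly_Mapping.lookup n 2)"
  proof -
    have "p * Poly_Mapping.lookup m 0 + c * Poly_Mapping.lookup m 1 + Poly_Mapping.lookup m 2
       = p * Poly_Mapping.lookup n 0 + c * Poly_Mapping.lookup n 1 + Poly_Mapping.lookup n 2"
      using arg_cong[OF e, of fst] unfolding Psi_def by simp
    then have "int (p * Poly_Mapping.lookup m 0 + c * Poly_Mapping.lookup m 1 + Poly_Mapping.lookup m 2)
       = int (p * Poly_Mapping.lookup n 0 + c * Poly_Mapping.lookup n 1 + Poly_Mapping.lookup n 2)" by (rule arg_cong)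
    then show ?thesis by (simp only: of_nat_add of_nat_mult)
  qed
  have E2: "int (Poly_Mapping.lookup m 1) + int a * int (Poly_Mapping.lookup m 2) + int p * int (Poly_Mapping.lookup m 3)
       = int (Poly_Mapping.lookup n 1) + int a * int (Poly_Mapping.lookup n 2) + int p * int (Poly_Mapping.lookup n 3)"
  proof -
    have "Poly_Mapping.lookup m 1 + a * Poly_Mapping.lookup m 2 + p * Poly_Mapping.lookup m 3
       = Poly_Mapping.lookup n 1 + a * Poly_Mapping.lookup n 2 + p * Poly_Mapping.lookup n 3"
      using arg_cong[OF e, of snd] unfolding Psi_def by simp
    then have "int (Poly_Mapping.lookup m 1 + a * Poly_Mapping.lookup m 2 + p * Poly_Mapping.lookup m 3)
       = int (Poly_Mapping.lookup n 1 + a * Poly_Mapping.lookup n 2 + p * Poly_Mapping.lookup n 3)" by (rule arg_cong)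
    then show ?thesis by (simp only: of_nat_add of_nat_mult)
  qed
  have "int (a * c) = int (p + 1)" using ac by (rule arg_cong)
  then have ac': "int a * int c = int p + 1" by simp
  have r: "int (Poly_Mapping.lookup m 0) = int (Poly_Mapping.lookup n 0) \<and> int (Poly_Mapping.lookup m 1) = int (Poly_Mapping.lookup n 1)
     \<and> int (Poly_Mapping.lookup m 2) = int (Poly_Mapping.lookup n 2) \<and> int (Poly_Mapping.lookup m 3) = int (Poly_Mapping.lookup n 3)"
  proof -
    have a2': "2 \<le> int a" and c2': "2 \<le> int c" and p0: "0 < int p" using a2 c2 p_pos by simp_all
    from sm have s1: "int (Poly_Mapping.lookup m 0) = 0 \<or> int (Poly_Mapping.lookup m 2) = 0"
      and s2: "int (Poly_Mapping.lookup m 1) = 0 \<or> int (Poly_Mapping.lookup m 3) = 0"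
      and s3: "int (Poly_Mapping.lookup m 0) = 0 \<or> int (Poly_Mapping.lookup m 3) = 0"
      unfolding std_def by simp_all
    from sn have t1: "int (Poly_Mapping.lookup n 0) = 0 \<or> int (Poly_Mapping.lookup n 2) = 0"
      and t2: "int (Poly_Mapping.lookup n 1) = 0 \<or> int (Poly_Mapping.lookup n 3) = 0"
      and t3: "int (Poly_Mapping.lookup n 0) = 0 \<or> int (Poly_Mapping.lookup n 3) = 0"
      unfolding std_def by simp_all
    show ?thesis
      by (rule std_inj_int[OF ac' a2' c2' p0 of_nat_0_le_iff of_nat_0_le_iff of_nat_0_le_iff of_nat_0_le_iff
          of_nat_0_le_iff of_nat_0_le_iff of_nat_0_le_iff of_nat_0_le_iff E1 E2 s1 s2 s3 t1 t2 t3])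
  qed
  show "m = n" by (rule pm4_eqI) (use r in simp_all)
qed

lemma split2:
  assumes "i \<noteq> j" "0 < Poly_Mapping.lookup m i" "0 < Poly_Mapping.lookup m j"
  shows "m = (m - (sg i 1 + sg j 1)) + (sg i 1 + sg j 1)"
  by (rule poly_mapping_eqI) (use assms in \<open>auto simp: lookup_add lookup_minus lookup_single when_def\<close>)

lemma step:
  assumes "m = m' + u" "Y u - Y w \<in> II"
  shows "Y m - Y (m' + w) \<in> II"
proof -
  have "Y m - Y (m' + w) = Y m' * (Y u - Y w)" unfolding assms(1) by (simp add: Y_mult[symmetric] algebra_simps)
  then show ?thesis using II_mult[OF assms(2)] by simp
qed

lemma nf: "\<exists>s. std s \<and> Psi s = Psi m \<and> Y m - Y s \<in> II"
proof (induction "Poly_Mapping.lookup m 0 + Poly_Mapping.lookup m 3" arbitrary: m rule: less_induct)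
  case less
  show ?case
  proof (cases "std m")
    case True
    then show ?thesis using II_zero by auto
  next
    case False
    then consider "0 < Poly_Mapping.lookup m 0" "0 < Poly_Mapping.lookup m 2"
      | "0 < Poly_Mapping.lookup m 1" "0 < Poly_Mapping.lookup m 3"
      | "0 < Poly_Mapping.lookup m 0" "0 < Poly_Mapping.lookup m 3"
      unfolding std_def by blast
    then show ?thesis
    proof cases
      case 1
      define m' where "m' = m - (sg 0 1 + sg 2 1)"
      have me: "m = m' + (sg 0 1 + sg 2 1)" unfolding m'_def by (rule split2) (use 1 in auto)
      have h: "Y (sg 0 1 + sg 2 1) - Y (sg 1 a) = - D1 p b 0" unfolding D1_0 by simp
      have i1: "Y m - Y (m' + sg 1 a) \<in> II"
        by (rule step[OF me]) (unfold h, rule II_uminus[OF II_D(1)])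
      have ps: "Psi (m' + sg 1 a) = Psi m" by (subst me, rule Psi_cong, rule Psi_rel0)
      have lt: "Poly_Mapping.lookup (m' + sg 1 a) 0 + Poly_Mapping.lookup (m' + sg 1 a) 3
          < Poly_Mapping.lookup m 0 + Poly_Mapping.lookup m 3"
        using 1 unfolding m'_def by (simp add: lookup_add lookup_minus lookup_single)
      obtain s where s: "std s" "Psi s = Psi (m' + sg 1 a)" "Y (m' + sg 1 a) - Y s \<in> II"
        using less.hyps[OF lt] by blast
      have "Y m - Y s = (Y m - Y (m' + sg 1 a)) + (Y (m' + sg 1 a) - Y s)" by simp
      then have "Y m - Y s \<in> II" using II_add[OF i1 s(3)] by simp
      then show ?thesis using s ps by auto
    next
      case 2
      define m' where "m' = m - (sg 1 1 + sg 3 1)"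
      have me: "m = m' + (sg 1 1 + sg 3 1)" unfolding m'_def by (rule split2) (use 2 in auto)
      have h: "Y (sg 1 1 + sg 3 1) - Y (sg 2 c) = - D1 p b 1" unfolding D1_1 by simp
      have i1: "Y m - Y (m' + sg 2 c) \<in> II"
        by (rule step[OF me]) (unfold h, rule II_uminus[OF II_D(2)])
      have ps: "Psi (m' + sg 2 c) = Psi m" by (subst me, rule Psi_cong, rule Psi_rel1)
      have lt: "Poly_Mapping.lookup (m' + sg 2 c) 0 + Poly_Mapping.lookup (m' + sg 2 c) 3
          < Poly_Mapping.lookup m 0 + Poly_Mapping.lookup m 3"
        using 2 unfolding m'_def by (simp add: lookup_add lookup_minus lookup_single)
      obtain s where s: "std s" "Psi s = Psi (m' + sg 2 c)" "Y (m' + sg 2 c) - Y s \<in> II"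
        using less.hyps[OF lt] by blast
      have "Y m - Y s = (Y m - Y (m' + sg 2 c)) + (Y (m' + sg 2 c) - Y s)" by simp
      then have "Y m - Y s \<in> II" using II_add[OF i1 s(3)] by simp
      then show ?thesis using s ps by auto
    next
      case 3
      define m' where "m' = m - (sg 0 1 + sg 3 1)"
      define w where "w = sg 1 (a - 1) + sg 2 (c - 1)"
      have me: "m = m' + (sg 0 1 + sg 3 1)" unfolding m'_def by (rule split2) (use 3 in auto)
      have h: "Y (sg 0 1 + sg 3 1) - Y w = - D1 p b 2" unfolding D1_2 w_def by simp
      have i1: "Y m - Y (m' + w) \<in> II"
        by (rule step[OF me]) (unfold h, rule II_uminus[OF II_D(3)])
      have ps: "Psi (m' + w) = Psi m" unfolding w_def by (subst me, rule Psi_cong, rule Psi_rel2)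
      have lt: "Poly_Mapping.lookup (m' + w) 0 + Poly_Mapping.lookup (m' + w) 3
          < Poly_Mapping.lookup m 0 + Poly_Mapping.lookup m 3"
        using 3 unfolding m'_def w_def by (simp add: lookup_add lookup_minus lookup_single)
      obtain s where s: "std s" "Psi s = Psi (m' + w)" "Y (m' + w) - Y s \<in> II"
        using less.hyps[OF lt] by blast
      have "Y m - Y s = (Y m - Y (m' + w)) + (Y (m' + w) - Y s)" by simp
      then have "Y m - Y s \<in> II" using II_add[OF i1 s(3)] by simp
      then show ?thesis using s ps by auto
    qed
  qed
qed

end

context tor
begin

lemma Th_inj: "inj_on Th {s. std s}"
proof (rule inj_onI)
  fix m n assume "m \<in> {s. std s}" "n \<in> {s. std s}" "Th m = Th n"
  then have "std m" "std n" by auto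
  have "Poly_Mapping.lookup (Th m) 0 = Poly_Mapping.lookup (Th n) 0"
       "Poly_Mapping.lookup (Th m) 1 = Poly_Mapping.lookup (Th n) 1"
    using \<open>Th m = Th n\<close> by simp_all
  then have "fst (Psi m) = fst (Psi n)" "snd (Psi m) = snd (Psi n)"
    unfolding Th_def by (simp_all add: lookup_add lookup_single)
  then have "Psi m = Psi n" by (simp add: prod_eq_iff)
  then show "m = n" using std_inj \<open>std m\<close> \<open>std n\<close> by blast
qed

lemma ker_sub: "phi p b f = 0 \<Longrightarrow> f \<in> II"
proof -
  assume f0: "phi p b f = 0"
  have "\<forall>m. \<exists>s. std s \<and> Psi s = Psi m \<and> Y m - Y s \<in> II" using nf by blast
  then obtain sf where sf: "\<And>m. std (sf m)" "\<And>m. Psi (sf m) = Psi m" "\<And>m. Y m - Y (sf m) \<in> II"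
    by metis
  define K where "K = Poly_Mapping.keys f"
  define g where "g = (\<Sum>m\<in>K. Poly_Mapping.single (sf m) (Poly_Mapping.lookup f m))"
  have fe: "f = (\<Sum>m\<in>K. Poly_Mapping.single m (Poly_Mapping.lookup f m))"
    unfolding K_def by (rule pm_expand)
  have "f - g = (\<Sum>m\<in>K. Poly_Mapping.single m (Poly_Mapping.lookup f m) - Poly_Mapping.single (sf m) (Poly_Mapping.lookup f m))"
    unfolding g_def by (subst fe) (simp add: sum_subtractf)
  also have "\<dots> = (\<Sum>m\<in>K. Poly_Mapping.single 0 (Poly_Mapping.lookup f m) * (Y m - Y (sf m)))"
    by (rule sum.cong) (simp_all add: Y_def right_diff_distrib mult_single)
  finally have fg: "f - g = \<dots>" .
  have fgI: "f - g \<in> II" unfolding fg by (rule II_sum) (rule II_mult, rule sf(3))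
  have "Lin Th g = Lin Th f - Lin Th (f - g)" by (simp add: Lin_diff)
  also have "\<dots> = 0" using f0 II_ker[OF fgI] by (simp add: phi_Lin)
  finally have Lg: "Lin Th g = 0" .
  have kg: "Poly_Mapping.keys g \<subseteq> {s. std s}"
  proof
    fix n assume "n \<in> Poly_Mapping.keys g"
    then have "n \<in> (\<Union>m\<in>K. Poly_Mapping.keys (Poly_Mapping.single (sf m) (Poly_Mapping.lookup f m)))"
      unfolding g_def using keys_sum[of "\<lambda>m. Poly_Mapping.single (sf m) (Poly_Mapping.lookup f m)" K] by (rule subsetD[rotated])
    then obtain m where "n \<in> Poly_Mapping.keys (Poly_Mapping.single (sf m) (Poly_Mapping.lookup f m))"
      by (rule UN_E)
    then have "n = sf m" by (auto split: if_splits)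
    then show "n \<in> {s. std s}" using sf(1) by simp
  qed
  have "g = 0"
  proof (rule poly_mapping_eqI)
    fix n
    show "Poly_Mapping.lookup g n = Poly_Mapping.lookup 0 n"
    proof (cases "std n")
      case True
      have "Poly_Mapping.lookup g n = Poly_Mapping.lookup (Lin Th g) (Th n)"
        by (rule lookup_Lin_inj[OF Th_inj kg, symmetric]) (use True in simp)
      then show ?thesis using Lg by simp
    next
      case False
      then have "n \<notin> Poly_Mapping.keys g" using kg by blast
      then show ?thesis by (simp add: in_keys_iff)
    qed
  qed
  then show "f \<in> II" using fgI by simp
qed

lemma part1: "range (partial1 p b) = {f. phi p b f = 0}"
  using ker_sub range_sub_ker unfolding II_def by blast

end

lemma ident1:
  fixes y0 y1 y2 y3 P Q u0 u1 u2 :: "'a::comm_ring"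
  shows "(y1 * P - y0 * y2) * (- (u0 * y1 + u2 * Q)) - (y2 * Q - y1 * y3) * (u1 * y1 + u2 * y0)
       = - y1 * ((y1 * P - y0 * y2) * u0 + (y2 * Q - y1 * y3) * u1 + (P * Q - y0 * y3) * u2)"
  by (simp add: algebra_simps)

lemma ident2:
  fixes y0 y1 y2 y3 P Q u0 u1 u2 :: "'a::comm_ring"
  shows "(y1 * P - y0 * y2) * (y3 * u2 + y2 * u0) + (y2 * Q - y1 * y3) * (P * u2 + y2 * u1)
       = y2 * ((y1 * P - y0 * y2) * u0 + (y2 * Q - y1 * y3) * u1 + (P * Q - y0 * y3) * u2)"
  by (simp add: algebra_simps)

lemma ident3:
  fixes y0 y1 y2 y3 P Q al be :: "'a::comm_ring"
  shows "(y1 * P - y0 * y2) * (- y3 * al - Q * be) + (y2 * Q - y1 * y3) * (- P * al - y0 * be)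
       + (P * Q - y0 * y3) * (y2 * al + y1 * be) = 0"
  by (simp add: algebra_simps)

context tor
begin

lemma LT_binom:
  assumes "u < w"
  shows "LT (Y u - Y w) = w"
proof -
  have k: "Poly_Mapping.keys (Y u - Y w) = {u, w}"
    using assms by (auto simp: Y_def in_keys_iff lookup_minus lookup_single when_def split: if_splits)
  show ?thesis unfolding LT_def k using assms by simp
qed

lemma not_less0_4: "\<not> (k::4) < 0"
  using Rep_bit0[of k] by (simp add: less_bit0_def bit0.Rep_0)

lemma less_f0: "sg 1 a < sg 0 1 + sg 2 1"
proof -
  have "less_fun (Poly_Mapping.lookup (sg 1 a)) (Poly_Mapping.lookup (sg 0 1 + sg 2 1))"
    unfolding less_fun_def
    by (rule exI[of _ 0]) (simp add: lookup_add lookup_single not_less0_4)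
  then show ?thesis by (simp add: less_poly_mapping.rep_eq)
qed

lemma less_f1: "sg 2 c < sg 1 1 + sg 3 1"
proof -
  have "less_fun (Poly_Mapping.lookup (sg 2 c)) (Poly_Mapping.lookup (sg 1 1 + sg 3 1))"
    unfolding less_fun_def
    by (rule exI[of _ 1]) (auto simp: lookup_add lookup_single dest: less1_4)
  then show ?thesis by (simp add: less_poly_mapping.rep_eq)
qed

lemma LT_f0: "LT (D1 p b 0) = sg 0 1 + sg 2 1"
  unfolding D1_0 by (rule LT_binom[OF less_f0])

lemma LT_f1: "LT (D1 p b 1) = sg 1 1 + sg 3 1"
  unfolding D1_1 by (rule LT_binom[OF less_f1])

lemma binom_nz: "u \<noteq> w \<Longrightarrow> Y u - Y w \<noteq> 0"
proof
  assume "u \<noteq> w" "Y u - Y w = 0"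
  then have "Poly_Mapping.lookup (Y u - Y w) u = 0" by simp
  then show False using \<open>u \<noteq> w\<close> by (simp add: Y_def lookup_minus lookup_single)
qed

lemma f0_nz: "D1 p b 0 \<noteq> 0"
  unfolding D1_0 by (rule binom_nz) (use less_f0 in auto)

lemma f1_nz: "D1 p b 1 \<noteq> 0"
  unfolding D1_1 by (rule binom_nz) (use less_f1 in auto)

definition rr :: "(4 \<Rightarrow>\<^sub>0 nat) \<Rightarrow> (4 \<Rightarrow>\<^sub>0 nat)" where
  "rr m = (m - (sg 1 (min (Poly_Mapping.lookup m 1) (Poly_Mapping.lookup m 3)) + sg 3 (min (Poly_Mapping.lookup m 1) (Poly_Mapping.lookup m 3))))
           + sg 2 (c * min (Poly_Mapping.lookup m 1) (Poly_Mapping.lookup m 3))"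

lemma rr_red: "Poly_Mapping.lookup (rr m) 1 = 0 \<or> Poly_Mapping.lookup (rr m) 3 = 0"
  unfolding rr_def by (auto simp: lookup_add lookup_minus lookup_single min_def)

lemma Y_sg_pow: "Y (sg 1 k + sg 3 k) = Y (sg 1 1 + sg 3 1) ^ k"
proof -
  have "Y (sg 1 k + sg 3 k) = y 1 ^ k * y 3 ^ k" by (simp add: y_pow Y_mult)
  also have "\<dots> = (y 1 * y 3) ^ k" by (simp add: power_mult_distrib)
  finally show ?thesis by (simp add: yy)
qed

lemma Y_sg2_pow: "Y (sg 2 (c * k)) = Y (sg 2 c) ^ k"
proof -
  have "Y (sg 2 (c * k)) = y 2 ^ (c * k)" by (simp add: y_pow)
  also have "\<dots> = (y 2 ^ c) ^ k" by (simp add: power_mult)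
  finally show ?thesis by (simp add: y_pow)
qed

lemma rr_div: "\<exists>q. Y m - Y (rr m) = D1 p b 1 * q"
proof -
  define k where "k = min (Poly_Mapping.lookup m 1) (Poly_Mapping.lookup m 3)"
  define m' where "m' = m - (sg 1 k + sg 3 k)"
  have me: "m = m' + (sg 1 k + sg 3 k)" unfolding m'_def k_def
    by (rule poly_mapping_eqI) (auto simp: lookup_add lookup_minus lookup_single when_def)
  have re: "rr m = m' + sg 2 (c * k)" unfolding rr_def m'_def k_def by (rule refl)
  define U where "U = Y (sg 1 1 + sg 3 1)"
  define V where "V = Y (sg 2 c)"
  have "Y m = Y m' * Y (sg 1 k + sg 3 k)" by (subst me) (rule Y_mult[symmetric])
  also have "\<dots> = Y m' * U ^ k" unfolding U_def by (rule arg_cong[where f="\<lambda>z. Y m' * z"], rule Y_sg_pow)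
  finally have Ym: "Y m = Y m' * U ^ k" .
  have "Y (rr m) = Y m' * Y (sg 2 (c * k))" unfolding re by (rule Y_mult[symmetric])
  also have "\<dots> = Y m' * V ^ k" unfolding V_def by (rule arg_cong[where f="\<lambda>z. Y m' * z"], rule Y_sg2_pow)
  finally have Yr: "Y (rr m) = Y m' * V ^ k" .
  have "Y m - Y (rr m) = Y m' * (U ^ k - V ^ k)"
    unfolding Ym Yr by (simp add: right_diff_distrib)
  also have "\<dots> = Y m' * ((U - V) * (\<Sum>i<k. V ^ (k - Suc i) * U ^ i))"
    by (simp add: power_diff_sumr2)
  also have "U - V = - D1 p b 1" unfolding U_def V_def D1_1 by simp
  finally have "Y m - Y (rr m) = D1 p b 1 * (- (Y m' * (\<Sum>i<k. V ^ (k - Suc i) * U ^ i)))"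
    by (simp add: algebra_simps)
  then show ?thesis by blast
qed

lemma coprime01:
  assumes eq: "D1 p b 0 * X = D1 p b 1 * Z"
  shows "\<exists>q. X = D1 p b 1 * q"
proof -
  let ?f0 = "D1 p b 0" and ?f1 = "D1 p b 1"
  have "\<forall>m. \<exists>q. Y m - Y (rr m) = ?f1 * q" using rr_div by blast
  then obtain qf where qf: "\<And>m. Y m - Y (rr m) = ?f1 * qf m" by metis
  define K where "K = Poly_Mapping.keys X"
  define X' where "X' = (\<Sum>m\<in>K. Poly_Mapping.single (rr m) (Poly_Mapping.lookup X m))"
  define q where "q = (\<Sum>m\<in>K. Poly_Mapping.single 0 (Poly_Mapping.lookup X m) * qf m)"
  have Xe: "X = (\<Sum>m\<in>K. Poly_Mapping.single m (Poly_Mapping.lookup X m))"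
    unfolding K_def by (rule pm_expand)
  have "X - X' = (\<Sum>m\<in>K. Poly_Mapping.single m (Poly_Mapping.lookup X m) - Poly_Mapping.single (rr m) (Poly_Mapping.lookup X m))"
    unfolding X'_def by (subst Xe) (simp add: sum_subtractf)
  also have "\<dots> = (\<Sum>m\<in>K. Poly_Mapping.single 0 (Poly_Mapping.lookup X m) * (Y m - Y (rr m)))"
    by (rule sum.cong) (simp_all add: Y_def right_diff_distrib mult_single)
  also have "\<dots> = ?f1 * q" unfolding q_def qf by (simp add: sum_distrib_left algebra_simps)
  finally have XX: "X = X' + ?f1 * q" by (simp add: algebra_simps)
  have kX: "Poly_Mapping.lookup k 1 = 0 \<or> Poly_Mapping.lookup k 3 = 0" if "k \<in> Poly_Mapping.keys X'" for k
  proof -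
    have "k \<in> (\<Union>m\<in>K. Poly_Mapping.keys (Poly_Mapping.single (rr m) (Poly_Mapping.lookup X m)))"
      using that unfolding X'_def using keys_sum[of "\<lambda>m. Poly_Mapping.single (rr m) (Poly_Mapping.lookup X m)" K] by (rule subsetD[rotated])
    then obtain m where "k \<in> Poly_Mapping.keys (Poly_Mapping.single (rr m) (Poly_Mapping.lookup X m))"
      by (rule UN_E)
    then have "k = rr m" by (auto split: if_splits)
    then show ?thesis using rr_red by simp
  qed
  have "?f0 * X' = ?f1 * (Z - ?f0 * q)"
    using eq unfolding XX by (simp add: algebra_simps)
  show ?thesis
  proof (cases "X' = 0")
    case True
    then show ?thesis using XX by auto
  next
    case False
    define Z' where "Z' = Z - ?f0 * q"
    have e2: "?f0 * X' = ?f1 * Z'" unfolding Z'_def by fact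
    have "Z' \<noteq> 0" using e2 False f0_nz by auto
    have "LT (?f0 * X') = LT (?f1 * Z')" using e2 by simp
    then have "LT ?f0 + LT X' = LT ?f1 + LT Z'"
      using LT_mult[OF f0_nz False] LT_mult[OF f1_nz \<open>Z' \<noteq> 0\<close>] by simp
    then have "(sg 0 1 + sg 2 1) + LT X' = (sg 1 1 + sg 3 1) + LT Z'" unfolding LT_f0 LT_f1 .
    then have "Poly_Mapping.lookup ((sg 0 1 + sg 2 1) + LT X') 1 = Poly_Mapping.lookup ((sg 1 1 + sg 3 1) + LT Z') 1"
          "Poly_Mapping.lookup ((sg 0 1 + sg 2 1) + LT X') 3 = Poly_Mapping.lookup ((sg 1 1 + sg 3 1) + LT Z') 3"
      by simp_all
    then have n1: "Poly_Mapping.lookup (LT X') 1 \<noteq> 0" and n3: "Poly_Mapping.lookup (LT X') 3 \<noteq> 0"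
      by (simp_all add: lookup_add lookup_single)
    have "Poly_Mapping.lookup (LT X') 1 = 0 \<or> Poly_Mapping.lookup (LT X') 3 = 0"
      by (rule kX[OF LT_in[OF False]])
    with n1 n3 have False by (elim disjE) simp_all
    then show ?thesis ..
  qed
qed

end

lemma comp0:
  fixes y0 y1 y2 y3 P Q u0 u1 u2 al be :: "'a::comm_ring"
  assumes "(y2*Q - y1*y3) * al = u0*y1 + u2*Q" "(y2*Q - y1*y3) * be = - (y3*u2 + y2*u0)"
  shows "(y2*Q - y1*y3) * (- y3 * al - Q * be) = (y2*Q - y1*y3) * u0"
proof -
  have "(y2*Q - y1*y3) * (- y3 * al - Q * be) = - y3 * ((y2*Q - y1*y3) * al) - Q * ((y2*Q - y1*y3) * be)"
    by (simp add: algebra_simps)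
  also have "\<dots> = - y3 * (u0*y1 + u2*Q) + Q * (y3*u2 + y2*u0)" unfolding assms by (simp add: algebra_simps)
  also have "\<dots> = (y2*Q - y1*y3) * u0" by (simp add: algebra_simps)
  finally show ?thesis .
qed

lemma comp1:
  fixes y0 y1 y2 y3 P Q u0 u1 u2 al be :: "'a::comm_ring"
  assumes "(y1*P - y0*y2) * al = - (u1*y1 + u2*y0)" "(y1*P - y0*y2) * be = P*u2 + y2*u1"
  shows "(y1*P - y0*y2) * (- P * al - y0 * be) = (y1*P - y0*y2) * u1"
proof -
  have "(y1*P - y0*y2) * (- P * al - y0 * be) = - P * ((y1*P - y0*y2) * al) - y0 * ((y1*P - y0*y2) * be)"
    by (simp add: algebra_simps)
  also have "\<dots> = P * (u1*y1 + u2*y0) - y0 * (P*u2 + y2*u1)" unfolding assms by (simp add: algebra_simps)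
  also have "\<dots> = (y1*P - y0*y2) * u1" by (simp add: algebra_simps)
  finally show ?thesis .
qed

lemma comp2:
  fixes y0 y1 y2 y3 P Q u0 u1 u2 al be :: "'a::comm_ring"
  assumes "(y1*P - y0*y2) * al = - (u1*y1 + u2*y0)" "(y1*P - y0*y2) * be = P*u2 + y2*u1"
  shows "(y1*P - y0*y2) * (y2 * al + y1 * be) = (y1*P - y0*y2) * u2"
proof -
  have "(y1*P - y0*y2) * (y2 * al + y1 * be) = y2 * ((y1*P - y0*y2) * al) + y1 * ((y1*P - y0*y2) * be)"
    by (simp add: algebra_simps)
  also have "\<dots> = - y2 * (u1*y1 + u2*y0) + y1 * (P*u2 + y2*u1)" unfolding assms by (simp add: algebra_simps)
  also have "\<dots> = (y1*P - y0*y2) * u2" by (simp add: algebra_simps)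
  finally show ?thesis .
qed

lemma inj_ident:
  fixes y0 y1 y2 P al be :: "'a::comm_ring"
  assumes "P * al + y0 * be = 0" "y2 * al + y1 * be = 0"
  shows "(y1*P - y0*y2) * al = 0"
proof -
  have "(y1*P - y0*y2) * al = y1 * (P * al + y0 * be) - y0 * (y2 * al + y1 * be)"
    by (simp add: algebra_simps)
  then show ?thesis using assms by simp
qed

context tor
begin

definition PP :: Rpoly where "PP = y 1 ^ (a - 1)"
definition QQ :: Rpoly where "QQ = y 2 ^ (c - 1)"

lemma f0e: "D1 p b 0 = y 1 * PP - y 0 * y 2"
proof -
  have "y 1 ^ a = y 1 * PP" unfolding PP_def using a2 by (cases a) auto
  then show ?thesis unfolding D1_def pa by simp
qed

lemma f1e: "D1 p b 1 = y 2 * QQ - y 1 * y 3"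
proof -
  have "y 2 ^ c = y 2 * QQ" unfolding QQ_def using c2 by (cases c) auto
  then show ?thesis unfolding D1_def pc by simp
qed

lemma f2e: "D1 p b 2 = PP * QQ - y 0 * y 3"
  unfolding D1_def pa pc PP_def QQ_def by simp

lemma p1e: "partial1 p b t = (y 1 * PP - y 0 * y 2) * fst t + (y 2 * QQ - y 1 * y 3) * fst (snd t) + (PP * QQ - y 0 * y 3) * snd (snd t)"
  unfolding partial1_def f0e f1e f2e ..

lemma p2e: "partial2 p b v = (- y 3 * fst v - QQ * snd v, - PP * fst v - y 0 * snd v, y 2 * fst v + y 1 * snd v)"
  unfolding partial2_def D2_def pa pc PP_def QQ_def by simp

lemma y_nz: "y v \<noteq> 0"
proof
  assume "y v = 0"
  then have "Poly_Mapping.lookup (y v) (Poly_Mapping.single v 1) = 0" by simp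
  then show False unfolding y_def by simp
qed

lemma part2: "{t. partial1 p b t = 0} = range (partial2 p b)"
proof
  show "range (partial2 p b) \<subseteq> {t. partial1 p b t = 0}"
  proof
    fix t assume "t \<in> range (partial2 p b)"
    then obtain v where "t = partial2 p b v" by auto
    then show "t \<in> {t. partial1 p b t = 0}" using ident3 unfolding p1e p2e by simp
  qed
next
  show "{t. partial1 p b t = 0} \<subseteq> range (partial2 p b)"
  proof
    fix t assume "t \<in> {t. partial1 p b t = 0}"
    then have S: "partial1 p b t = 0" by simp
    obtain u0 u1 u2 where t: "t = (u0, u1, u2)" by (cases t) auto
    define f0 where "f0 = y 1 * PP - y 0 * y 2"
    define f1 where "f1 = y 2 * QQ - y 1 * y 3"
    have f0nz: "f0 \<noteq> 0" using f0_nz f0e unfolding f0_def by simp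
    have f1nz: "f1 \<noteq> 0" using f1_nz f1e unfolding f1_def by simp
    have S': "(y 1 * PP - y 0 * y 2) * u0 + (y 2 * QQ - y 1 * y 3) * u1 + (PP * QQ - y 0 * y 3) * u2 = 0"
      using S unfolding p1e t by simp
    have "f0 * (- (u0 * y 1 + u2 * QQ)) - f1 * (u1 * y 1 + u2 * y 0) = 0"
      unfolding f0_def f1_def ident1 S' by simp
    then have "D1 p b 0 * (- (u0 * y 1 + u2 * QQ)) = D1 p b 1 * (u1 * y 1 + u2 * y 0)"
      unfolding f0e f1e f0_def f1_def by simp
    then obtain q1 where q1: "- (u0 * y 1 + u2 * QQ) = D1 p b 1 * q1" using coprime01 by blast
    define al where "al = - q1"
    have "f1 * q1 = - (u0 * y 1 + u2 * QQ)" using q1[symmetric] f1e unfolding f1_def by simp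
    then have A1: "f1 * al = u0 * y 1 + u2 * QQ" unfolding al_def by simp
    have "f1 * (u1 * y 1 + u2 * y 0) = f0 * (- (u0 * y 1 + u2 * QQ))"
      using \<open>f0 * _ - f1 * _ = 0\<close> by simp
    also have "\<dots> = f1 * (- (f0 * al))" unfolding A1[symmetric] by (simp add: algebra_simps)
    finally have "f1 * (u1 * y 1 + u2 * y 0) = f1 * (- (f0 * al))" .
    then have "u1 * y 1 + u2 * y 0 = - (f0 * al)" using f1nz mult_left_cancel by blast
    then have A0: "f0 * al = - (u1 * y 1 + u2 * y 0)" by (metis minus_minus)
    have hB: "f0 * (y 3 * u2 + y 2 * u0) + f1 * (PP * u2 + y 2 * u1) = 0"
      unfolding f0_def f1_def ident2 S' by simp
    then have hB': "f0 * (y 3 * u2 + y 2 * u0) = - (f1 * (PP * u2 + y 2 * u1))"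
      by (simp only: eq_neg_iff_add_eq_0)
    then have "D1 p b 0 * (y 3 * u2 + y 2 * u0) = D1 p b 1 * (- (PP * u2 + y 2 * u1))"
      unfolding f0e f1e f0_def f1_def mult_minus_right .
    then obtain q2 where q2: "y 3 * u2 + y 2 * u0 = D1 p b 1 * q2" using coprime01 by blast
    define be where "be = - q2"
    have fq2: "f1 * q2 = y 3 * u2 + y 2 * u0" using q2[symmetric] f1e unfolding f1_def by simp
    then have B1: "f1 * be = - (y 3 * u2 + y 2 * u0)" unfolding be_def by simp
    have "f1 * (- (PP * u2 + y 2 * u1)) = f0 * (y 3 * u2 + y 2 * u0)" unfolding hB' mult_minus_right ..
    also have "\<dots> = f0 * (f1 * q2)" unfolding fq2 ..
    also have "\<dots> = f1 * (- (f0 * be))" unfolding be_def by (simp add: algebra_simps)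
    finally have "f1 * (- (PP * u2 + y 2 * u1)) = f1 * (- (f0 * be))" .
    then have "- (PP * u2 + y 2 * u1) = - (f0 * be)" using f1nz mult_left_cancel by blast
    then have B0: "f0 * be = PP * u2 + y 2 * u1" by (metis minus_minus)
    have c0: "f1 * (- y 3 * al - QQ * be) = f1 * u0"
      unfolding f1_def by (rule comp0[OF A1[unfolded f1_def] B1[unfolded f1_def]])
    have c1: "f0 * (- PP * al - y 0 * be) = f0 * u1"
      unfolding f0_def by (rule comp1[OF A0[unfolded f0_def] B0[unfolded f0_def]])
    have c2: "f0 * (y 2 * al + y 1 * be) = f0 * u2"
      unfolding f0_def by (rule comp2[OF A0[unfolded f0_def] B0[unfolded f0_def]])
    have "t = partial2 p b (al, be)"
      unfolding p2e t using c0 c1 c2 f0nz f1nz by simp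
    then show "t \<in> range (partial2 p b)" by blast
  qed
qed

lemma part3: "inj (partial2 p b)"
proof (rule injI)
  fix v w assume e: "partial2 p b v = partial2 p b w"
  define al where "al = fst v - fst w"
  define be where "be = snd v - snd w"
  have h1: "PP * al + y 0 * be = 0" using e unfolding p2e al_def be_def by (simp add: algebra_simps)
  have h2: "y 2 * al + y 1 * be = 0" using e unfolding p2e al_def be_def by (simp add: algebra_simps)
  have "(y 1 * PP - y 0 * y 2) * al = 0" by (rule inj_ident[OF h1 h2])
  then have "al = 0" using f0_nz f0e by simp
  then have "be = 0" using h2 y_nz by simp
  show "v = w" using \<open>al = 0\<close> \<open>be = 0\<close> unfolding al_def be_def by (simp add: prod_eq_iff)
qed

end

context tor
begin

lemma zdeg_v: "zdeg p b (var_index v) = (if v = 0 then p else if v = 1 then c + 1 else if v = 2 then a + 1 else p)"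
  unfolding zdeg_def zs_nth by simp

lemma wdeg_Psi: "wdeg p b m = fst (Psi m) + snd (Psi m)"
proof -
  have "wdeg p b m = (\<Sum>v\<in>UNIV. Poly_Mapping.lookup m v * zdeg p b (var_index v))"
    unfolding wdeg_def by (rule sum.mono_neutral_left) (auto simp: in_keys_iff)
  also have "\<dots> = fst (Psi m) + snd (Psi m)"
    unfolding UNIV4 Psi_def by (simp add: zdeg_v algebra_simps)
  finally show ?thesis .
qed

lemma homog_binom:
  assumes "int (wdeg p b u) = d" "int (wdeg p b w) = d"
  shows "homog p b (Y u - Y w) d"
  unfolding homog_def
proof
  fix m assume "m \<in> Poly_Mapping.keys (Y u - Y w)"
  then have "m = u \<or> m = w" using keys_diff[of "Y u" "Y w"] by (auto simp: Y_def split: if_splits)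
  then show "int (wdeg p b m) = d" using assms by auto
qed

lemma homog_mon:
  assumes "int (wdeg p b u) = d"
  shows "homog p b (Y u) d" "homog p b (- Y u) d"
  unfolding homog_def using assms by (auto simp: Y_def split: if_splits)

lemma ibinv: "int (binv p b) = int p - int a" using binv_a by linarith
lemma ib: "int b = int p - int c" using bc by linarith

lemma dg1_vals: "dg1 p b ! 0 = int p + int a + 1" "dg1 p b ! 1 = int p + int c + 1" "dg1 p b ! 2 = 2 * int p"
  unfolding dg1_def ibinv ib by simp_all

lemma dg2_vals: "dg2 p b ! 0 = 2 * int p + int a + 1" "dg2 p b ! 1 = 2 * int p + int c + 1"
  unfolding dg2_def ibinv ib by simp_all

lemma wd: "wdeg p b (sg v k) = (if v = 0 then p * k else if v = 1 then (c + 1) * k else if v = 2 then (a + 1) * k else p * k)"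
  unfolding wdeg_Psi Psi_sg by (simp add: algebra_simps)

lemma wd1: "wdeg p b (sg 1 k) = (c + 1) * k" unfolding wd by simp
lemma wd2: "wdeg p b (sg 2 k) = (a + 1) * k" unfolding wd by simp

lemma wd_add: "wdeg p b (m + n) = wdeg p b m + wdeg p b n"
  unfolding wdeg_Psi Psi_add by simp

lemma ia1: "int (a - 1) = int a - 1" using a2 by simp
lemma ic1: "int (c - 1) = int c - 1" using c2 by simp

lemma iac: "int a * int c = int p + 1" using ac by (metis of_nat_1 of_nat_add of_nat_mult)

lemma homog_D1: "\<forall>i<3. homog p b (D1 p b i) (dg1 p b ! i)"
proof (intro allI impI)
  fix i :: nat assume "i < 3"
  then consider "i = 0" | "i = 1" | "i = 2" by linarith
  then show "homog p b (D1 p b i) (dg1 p b ! i)"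
  proof cases
    case 1
    have "int (wdeg p b (sg 1 a)) = int p + int a + 1"
      unfolding wd using iac by (simp add: algebra_simps)
    moreover have "int (wdeg p b (sg 0 1 + sg 2 1)) = int p + int a + 1"
      unfolding wd_add wd by simp
    ultimately show ?thesis unfolding 1 D1_0 dg1_vals by (rule homog_binom)
  next
    case 2
    have "int (wdeg p b (sg 2 c)) = int p + int c + 1"
      unfolding wd using iac by (simp add: algebra_simps)
    moreover have "int (wdeg p b (sg 1 1 + sg 3 1)) = int p + int c + 1"
      unfolding wd_add wd by simp
    ultimately show ?thesis unfolding 2 D1_1 dg1_vals by (rule homog_binom)
  next
    case 3
    have "int (wdeg p b (sg 1 (a - 1) + sg 2 (c - 1))) = int ((c + 1) * (a - 1)) + int ((a + 1) * (c - 1))"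
      unfolding wd_add wd by simp
    also have "\<dots> = (int c + 1) * (int a - 1) + (int a + 1) * (int c - 1)"
      by (simp only: of_nat_mult of_nat_add of_nat_1 ia1 ic1)
    also have "\<dots> = 2 * int p" using iac by (simp add: algebra_simps)
    finally have h1: "int (wdeg p b (sg 1 (a - 1) + sg 2 (c - 1))) = 2 * int p" .
    have "int (wdeg p b (sg 0 1 + sg 3 1)) = 2 * int p"
      unfolding wd_add wd by simp
    with h1 show ?thesis unfolding 3 D1_2 dg1_vals by (rule homog_binom)
  qed
qed

lemma D2_vals:
  "D2 p b 0 0 = - Y (sg 3 1)" "D2 p b 0 1 = - Y (sg 2 (c - 1))"
  "D2 p b 1 0 = - Y (sg 1 (a - 1))" "D2 p b 1 1 = - Y (sg 0 1)"
  "D2 p b 2 0 = Y (sg 2 1)" "D2 p b 2 1 = Y (sg 1 1)"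
  unfolding D2_def pa pc y_pow by (simp_all add: y_Y)

lemma homog_D2: "\<forall>i<3. \<forall>j<2. homog p b (D2 p b i j) (dg2 p b ! j - dg1 p b ! i)"
proof (intro allI impI)
  fix i j :: nat assume "i < 3" "j < 2"
  then consider "i = 0" "j = 0" | "i = 0" "j = 1" | "i = 1" "j = 0" | "i = 1" "j = 1" | "i = 2" "j = 0" | "i = 2" "j = 1"
    by linarith
  then show "homog p b (D2 p b i j) (dg2 p b ! j - dg1 p b ! i)"
  proof cases
    case 1
    have "int (wdeg p b (sg 3 1)) = dg2 p b ! 0 - dg1 p b ! 0" unfolding wd dg1_vals dg2_vals by simp
    then show ?thesis unfolding 1 D2_vals by (rule homog_mon)
  next
    case 2
    have "int (wdeg p b (sg 2 (c - 1))) = (int a + 1) * (int c - 1)" unfolding wd2 by (simp only: of_nat_mult of_nat_add of_nat_1 ic1)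
    also have "\<dots> = dg2 p b ! 1 - dg1 p b ! 0" unfolding dg1_vals dg2_vals using iac by (simp add: algebra_simps)
    finally show ?thesis unfolding 2 D2_vals by (rule homog_mon)
  next
    case 3
    have "int (wdeg p b (sg 1 (a - 1))) = (int c + 1) * (int a - 1)" unfolding wd1 by (simp only: of_nat_mult of_nat_add of_nat_1 ia1)
    also have "\<dots> = dg2 p b ! 0 - dg1 p b ! 1" unfolding dg1_vals dg2_vals using iac by (simp add: algebra_simps)
    finally show ?thesis unfolding 3 D2_vals by (rule homog_mon)
  next
    case 4
    have "int (wdeg p b (sg 0 1)) = dg2 p b ! 1 - dg1 p b ! 1" unfolding wd dg1_vals dg2_vals by simp
    then show ?thesis unfolding 4 D2_vals by (rule homog_mon)
  next
    case 5
    have "int (wdeg p b (sg 2 1)) = dg2 p b ! 0 - dg1 p b ! 2" unfolding wd dg1_vals dg2_vals by simp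
    then show ?thesis unfolding 5 D2_vals by (rule homog_mon)
  next
    case 6
    have "int (wdeg p b (sg 1 1)) = dg2 p b ! 1 - dg1 p b ! 2" unfolding wd dg1_vals dg2_vals by simp
    then show ?thesis unfolding 6 D2_vals by (rule homog_mon)
  qed
qed

lemma main:
  "range (partial1 p b) = {f. phi p b f = 0}
       \<and> {a. partial1 p b a = 0} = range (partial2 p b)
       \<and> inj (partial2 p b)
       \<and> (\<forall>i<3. homog p b (D1 p b i) (dg1 p b ! i))
       \<and> (\<forall>i<3. \<forall>j<2. homog p b (D2 p b i j) (dg2 p b ! j - dg1 p b ! i))"
  using part1 part2 part3 homog_D1 homog_D2 by blast

end

theorem corollary4p3:
  fixes p b :: nat
  assumes "prime p" and "0 < b" and "b < p"
    and "card (inv_gens p b) = 4"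
  shows "range (partial1 p b) = {f. phi p b f = 0}
       \<and> {a. partial1 p b a = 0} = range (partial2 p b)
       \<and> inj (partial2 p b)
       \<and> (\<forall>i<3. homog p b (D1 p b i) (dg1 p b ! i))
       \<and> (\<forall>i<3. \<forall>j<2. homog p b (D2 p b i j) (dg2 p b ! j - dg1 p b ! i))"
proof -
  obtain a c where h: "zs p b = [(p,0),(c,1),(1,a),(0,p)]" "binv p b + a = p" "b + c = p"
      "a * c = p + 1" "2 \<le> a" "2 \<le> c"
    using gens4[OF assms] by blast
  interpret tor p b a c by (rule tor.intro) (use h in auto)
  show ?thesis by (rule main)
qed

end
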